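(* Assume (H1), (H3) and (H6). Let $c=(c(n))_{n\in\mathbb{Z}}$ be defined by \[ c(n)=\sum_{k=-\infty}^{+\infty}\mathcal{G}(n,k)\,h(k),\qquad n\in\mathbb{Z}. \] Then $c$ is the unique almost periodic solution of the linear inhomogeneous difference system \[ c(n+1)=H(n)c(n)+h(n),\qquad n\in\mathbb{Z}. \] Moreover, \[ |c|_{\infty}\le \frac{2K}{1-\rho}\,|h|_{\infty}. \]
   Context: Let $q\in\mathbb{N}$. $|\cdot|$ denotes the Euclidean norm on every finite-dimensional space (for matrices, the Euclidean norm of the array of entries), and for $g:D\to E$, $|g|_\infty=\sup_{t\in D}|g(t)|$. Fix a real sequence $(t_n)_{n\in\mathbb{Z}}$ with $t_n<t_{n+1}$ and $t_n\to\pm\infty$ as $n\to\pm\infty$; put $t^{(k)}_n=t_{n+k}-t_n$. A set $E\subseteq\mathbb{R}$ (or $\subseteq\mathbb{Z}$) is relatively dense if there is $l>0$ with $E\cap[m,m+l]\neq\emptyset$ for all $m\in\mathbb{R}$. For $\mathbb{A}\in\{\mathbb{R},\mathbb{Z}\}$ and a finite-dimensional normed space $E$, a continuous $g:\mathbb{A}\to E$ is almost periodic if for every $\varepsilon>0$ the set $T(g,\varepsilon)=\{\tau\in\mathbb{A}:|g(t+\tau)-g(t)|\le\varepsilon\ \forall t\in\mathbb{A}\}$ is relatively dense. Let $A,B:\mathbb{R}\to M_q(\mathbb{C})$ and $f:\mathbb{R}\to\mathbb{C}^q$ be locally integrable. Let $X$ be a fundamental matrix of $x'=A(t)x$ and $X(t,s)=X(t)X(s)^{-1}$.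 For $n\in\mathbb{Z}$ and $t\in[t_n,t_{n+1}]$ let $\mathcal{J}_n(t)=I+\int_{t_n}^tX(t_n,u)B(u)\,du$; it is assumed throughout that $\mathcal{J}_n(t)$ is invertible for all $n\in\mathbb{Z}$, $t\in[t_n,t_{n+1}]$. Let $Z_n(t)=X(t,t_n)\mathcal{J}_n(t)$, $H(n)=Z_n(t_{n+1})$, and $h(n)=\int_{t_n}^{t_{n+1}}X(t_{n+1},u)f(u)\,du$. Hypotheses: (H1) $A$ and $B$ are almost periodic. (H2) For every $\varepsilon>0$ the set $\bigcap_{k\in\mathbb{N}}\{T\in\mathbb{Z}: |t^{(k)}_{T+n}-t^{(k)}_n|\le\varepsilon \text{ for all } n\in\mathbb{Z}\}$ is relatively dense. (H3) (H2) holds, and for every $\varepsilon>0$ the set $\{\tau\in\mathbb{R}: |f(t+\tau)-f(t)|\le\varepsilon \text{ for all } t\in\mathbb{R}\setminus\bigcup_{n\in\mathbb{Z}}(t_n-\varepsilon,t_n+\varepsilon)\}$ is relatively dense, and there is $\delta_\varepsilon>0$ such that $|f(t'+\tau')-f(t')|\le\varepsilon$ whenever $|\tau'|\le\delta_\varepsilon$ and $t',t'+\tau'$ lie in a common interval $[t_n,t_{n+1}]$. (H6) Let $\Phi$ be a fundamental matrix of $\phi(n+1)=H(n)\phi(n)$ (i.e. $\Phi(n+1)=H(n)\Phi(n)$, $\Phi(n)$ invertible). There are a projection $\Pi$ on $\mathbb{C}^q$ and constants $K>0$, $0<\rho<1$ such that $|\mathcal{G}(n,k)|\le K\rho^{|n-k|}$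 for all $n,k\in\mathbb{Z}$, where $\mathcal{G}(n,k)=\Phi(n)\Pi\Phi(k+1)^{-1}$ if $n>k$ and $\mathcal{G}(n,k)=-\Phi(n)(I-\Pi)\Phi(k+1)^{-1}$ if $n\le k$. *)

theory Defs
  imports "HOL-Analysis.Analysis"
begin

definition rel_dense_real :: "real set \<Rightarrow> bool" where
  "rel_dense_real E \<longleftrightarrow> (\<exists>l>0. \<forall>m::real. \<exists>x\<in>E. m \<le> x \<and> x \<le> m + l)"

definition rel_dense_int :: "int set \<Rightarrow> bool" where
  "rel_dense_int E \<longleftrightarrow> (\<exists>l>0. \<forall>m::real. \<exists>x\<in>E. m \<le> real_of_int x \<and> real_of_int x \<le> m + l)"

definition almost_periodic_real :: "(real \<Rightarrow> 'a::real_normed_vector) \<Rightarrow> bool" where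
  "almost_periodic_real g \<longleftrightarrow> continuous_on UNIV g \<and>
     (\<forall>\<epsilon>>0. rel_dense_real {\<tau>. \<forall>t. norm (g (t + \<tau>) - g t) \<le> \<epsilon>})"

text \<open>On the integers every function is continuous.\<close>
definition almost_periodic_int :: "(int \<Rightarrow> 'a::real_normed_vector) \<Rightarrow> bool" where
  "almost_periodic_int g \<longleftrightarrow>
     (\<forall>\<epsilon>>0. rel_dense_int {\<tau>. \<forall>n. norm (g (n + \<tau>) - g n) \<le> \<epsilon>})"

definition tk :: "(int \<Rightarrow> real) \<Rightarrow> nat \<Rightarrow> int \<Rightarrow> real" where
  "tk tt k n = tt (n + int k) - tt n"

definition H2 :: "(int \<Rightarrow> real) \<Rightarrow> bool" where
  "H2 tt \<longleftrightarrow> (\<forall>\<epsilon>>0. rel_dense_int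
      (\<Inter>k\<in>{k::nat. k \<ge> 1}. {T. \<forall>n. \<bar>tk tt k (T + n) - tk tt k n\<bar> \<le> \<epsilon>}))"

definition H3 :: "(int \<Rightarrow> real) \<Rightarrow> (real \<Rightarrow> 'a::real_normed_vector) \<Rightarrow> bool" where
  "H3 tt f \<longleftrightarrow> H2 tt \<and>
     (\<forall>\<epsilon>>0.
        rel_dense_real {\<tau>. \<forall>t. t \<notin> (\<Union>n. {tt n - \<epsilon> <..< tt n + \<epsilon>}) \<longrightarrow>
                                   norm (f (t + \<tau>) - f t) \<le> \<epsilon>}
      \<and> (\<exists>\<delta>>0. \<forall>t' \<tau>' n. \<bar>\<tau>'\<bar> \<le> \<delta> \<and> t' \<in> {tt n..tt (n+1)} \<and> t' + \<tau>' \<in> {tt n..tt (n+1)}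
                 \<longrightarrow> norm (f (t' + \<tau>') - f t') \<le> \<epsilon>))"

text \<open>Fundamental matrix of x' = A(t) x in the Caratheodory (integral) sense.\<close>
definition fundamental_matrix ::
  "(real \<Rightarrow> complex^'q^'q) \<Rightarrow> (real \<Rightarrow> complex^'q^'q) \<Rightarrow> bool" where
  "fundamental_matrix A X \<longleftrightarrow> (\<forall>t. invertible (X t)) \<and>
     (\<forall>s t. s \<le> t \<longrightarrow> ((\<lambda>u. A u ** X u) has_integral (X t - X s)) {s..t})"

definition Xts :: "(real \<Rightarrow> complex^'q^'q) \<Rightarrow> real \<Rightarrow> real \<Rightarrow> complex^'q^'q" where
  "Xts X t s = X t ** matrix_inv (X s)"

definition Jmat :: "(real \<Rightarrow> complex^'q^'q) \<Rightarrow> (real \<Rightarrow> complex^'q^'q) \<Rightarrow> (int \<Rightarrow> real)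
     \<Rightarrow> int \<Rightarrow> real \<Rightarrow> complex^'q^'q" where
  "Jmat X B tt n t = mat 1 + integral {tt n..t} (\<lambda>u. Xts X (tt n) u ** B u)"

definition Zmat :: "(real \<Rightarrow> complex^'q^'q) \<Rightarrow> (real \<Rightarrow> complex^'q^'q) \<Rightarrow> (int \<Rightarrow> real)
     \<Rightarrow> int \<Rightarrow> real \<Rightarrow> complex^'q^'q" where
  "Zmat X B tt n t = Xts X t (tt n) ** Jmat X B tt n t"

definition Hmat :: "(real \<Rightarrow> complex^'q^'q) \<Rightarrow> (real \<Rightarrow> complex^'q^'q) \<Rightarrow> (int \<Rightarrow> real)
     \<Rightarrow> int \<Rightarrow> complex^'q^'q" where
  "Hmat X B tt n = Zmat X B tt n (tt (n + 1))"

definition hvec :: "(real \<Rightarrow> complex^'q^'q) \<Rightarrow> (real \<Rightarrow> complex^'q) \<Rightarrow> (int \<Rightarrow> real)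
     \<Rightarrow> int \<Rightarrow> complex^'q" where
  "hvec X f tt n = integral {tt n..tt (n + 1)} (\<lambda>u. Xts X (tt (n + 1)) u *v f u)"

definition Gmat :: "(int \<Rightarrow> complex^'q^'q) \<Rightarrow> complex^'q^'q \<Rightarrow> int \<Rightarrow> int \<Rightarrow> complex^'q^'q" where
  "Gmat Phi P n k =
     (if n > k then Phi n ** P ** matrix_inv (Phi (k + 1))
      else - (Phi n ** (mat 1 - P) ** matrix_inv (Phi (k + 1))))"

end

theory Submission
  imports Defs
begin


lemma norm_vec_sq: "(norm (x::'a::real_normed_vector^'n))^2 = (\<Sum>i\<in>UNIV. (norm (x$i))^2)"
  unfolding norm_vec_def L2_set_def by (simp add: sum_nonneg)

lemma cs_sum: "norm (\<Sum>j\<in>UNIV. (a j::complex) * b j) \<le> norm (vec_lambda a) * norm (vec_lambda b)"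
proof -
  have "norm (\<Sum>j\<in>UNIV. (a j::complex) * b j) \<le> (\<Sum>j\<in>UNIV. norm (a j * b j))"
    by (rule norm_sum)
  also have "\<dots> = (\<Sum>j\<in>UNIV. \<bar>norm (a j)\<bar> * \<bar>norm (b j)\<bar>)" by (simp add: norm_mult)
  also have "\<dots> \<le> L2_set (\<lambda>j. norm (a j)) UNIV * L2_set (\<lambda>j. norm (b j)) UNIV"
    by (rule L2_set_mult_ineq)
  also have "\<dots> = norm (vec_lambda a) * norm (vec_lambda b)"
    by (simp add: norm_vec_def)
  finally show ?thesis .
qed

lemma norm_mv_comp: "norm (((A::complex^'n^'m) *v x) $ i) \<le> norm (A$i) * norm x"
proof -
  have "((A *v x) $ i) = (\<Sum>j\<in>UNIV. (A$i$j) * x$j)" by (simp add: matrix_vector_mult_def)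
  also have "norm \<dots> \<le> norm (vec_lambda (\<lambda>j. A$i$j)) * norm (vec_lambda (\<lambda>j. x$j))" by (rule cs_sum)
  finally show ?thesis by simp
qed

lemma norm_mv: "norm ((A::complex^'n^'m) *v x) \<le> norm A * norm x"
proof -
  have "(norm (A *v x))^2 = (\<Sum>i\<in>UNIV. (norm ((A *v x)$i))^2)" by (rule norm_vec_sq)
  also have "\<dots> \<le> (\<Sum>i\<in>UNIV. (norm (A$i) * norm x)^2)"
    by (intro sum_mono power_mono norm_mv_comp) simp
  also have "\<dots> = (\<Sum>i\<in>UNIV. (norm (A$i))^2) * (norm x)^2"
    by (simp add: power_mult_distrib sum_distrib_right)
  also have "\<dots> = (norm A * norm x)^2" by (simp add: norm_vec_sq[of A] power_mult_distrib)
  finally show ?thesis by (rule power2_le_imp_le) simp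
qed

lemma norm_transpose: "norm (transpose (A::complex^'n^'m)) = norm A"
proof -
  have "(norm (transpose A))^2 = (norm A)^2"
    apply (simp add: norm_vec_sq[of "transpose A"] norm_vec_sq[of A] norm_vec_sq[of "transpose A $ _"] norm_vec_sq[of "A $ _"])
    apply (simp add: transpose_def)
    by (rule sum.swap)
  then show ?thesis by (simp add: power2_eq_iff_nonneg)
qed

lemma norm_mm: "norm ((A::complex^'n^'m) ** B) \<le> norm A * norm (B::complex^'k^'n)"
proof -
  have row: "(A ** B) $ i = transpose B *v (A $ i)" for i
    by (simp add: matrix_matrix_mult_def matrix_vector_mult_def transpose_def vec_eq_iff mult.commute)
  have rb: "norm ((A ** B) $ i) \<le> norm B * norm (A$i)" for i
    unfolding row norm_transpose[symmetric, of B] by (rule norm_mv)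
  have "(norm (A ** B))^2 = (\<Sum>i\<in>UNIV. (norm ((A ** B)$i))^2)" by (rule norm_vec_sq)
  also have "\<dots> \<le> (\<Sum>i\<in>UNIV. (norm B * norm (A$i))^2)"
    by (intro sum_mono power_mono rb) simp
  also have "\<dots> = (norm B)^2 * (\<Sum>i\<in>UNIV. (norm (A$i))^2)"
    by (simp add: power_mult_distrib sum_distrib_left)
  also have "\<dots> = (norm A * norm B)^2" by (simp add: norm_vec_sq[of A] power_mult_distrib)
  finally show ?thesis by (rule power2_le_imp_le) simp
qed

lemma bb_mm: "bounded_bilinear ((**) :: complex^'n^'m \<Rightarrow> complex^'k^'n \<Rightarrow> _)"
  apply (rule bounded_bilinear.intro)
  apply (simp add: matrix_matrix_mult_def vec_eq_iff distrib_right sum.distrib)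
  apply (simp add: matrix_add_ldistrib)
  apply (simp add: matrix_matrix_mult_def vec_eq_iff scaleR_sum_right)
  apply (simp add: matrix_matrix_mult_def vec_eq_iff scaleR_sum_right)
  by (rule exI[of _ 1]) (simp add: norm_mm)

lemma bb_mv: "bounded_bilinear ((*v) :: complex^'n^'m \<Rightarrow> complex^'n \<Rightarrow> _)"
  apply (rule bounded_bilinear.intro)
  apply (simp add: matrix_vector_mult_def vec_eq_iff distrib_right sum.distrib)
  apply (simp add: matrix_vector_mult_def vec_eq_iff distrib_left sum.distrib)
  apply (simp add: matrix_vector_mult_def vec_eq_iff scaleR_sum_right)
  apply (simp add: matrix_vector_mult_def vec_eq_iff scaleR_sum_right)
  by (rule exI[of _ 1]) (simp add: norm_mv)

lemma minv: assumes "invertible (A::'a::semiring_1^'n^'m)"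
  shows "A ** matrix_inv A = mat 1" "matrix_inv A ** A = mat 1"
  using someI_ex[OF assms[unfolded invertible_def]] unfolding matrix_inv_def by auto

lemma norm_mat1: "norm (mat 1 :: complex^'n^'n) = sqrt (CARD('n))"
proof -
  have e: "(cmod (if i = ia then 1 else 0))\<^sup>2 = (if i = ia then 1 else (0::real))" for i ia :: 'n by auto
  have "(norm (mat 1 :: complex^'n^'n))^2 = CARD('n)"
  proof -
    have r: "(norm ((mat 1 :: complex^'n^'n) $ i))^2 = 1" for i
      unfolding norm_vec_sq[of "(mat 1 :: complex^'n^'n) $ i"] by (simp add: mat_def e)
    show ?thesis unfolding norm_vec_sq[of "mat 1 :: complex^'n^'n"] r by simp
  qed
  then show ?thesis by (metis norm_ge_zero real_sqrt_unique)
qed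




lemma gronwall_fwd:
  fixes \<phi> :: "real \<Rightarrow> real"
  assumes cont: "continuous_on {a..b} \<phi>" and bpos: "\<beta> > 0"
    and le: "\<And>x. x \<in> {a..b} \<Longrightarrow> \<phi> x \<le> \<alpha> + \<beta> * integral {a..x} \<phi>"
    and x: "x \<in> {a..b}"
  shows "\<phi> x \<le> \<alpha> * exp (\<beta> * (x - a))"
proof -
  define R where "R u = integral {a..u} \<phi>" for u
  define g where "g u = exp (- \<beta> * (u - a)) * (R u + \<alpha> / \<beta>)" for u
  define g' where "g' u = exp (- \<beta> * (u - a)) * (\<phi> u - \<beta> * R u - \<alpha>)" for u
  have dR: "(R has_real_derivative \<phi> u) (at u within {a..b})" if "u \<in> {a..b}" for u
    unfolding R_def has_real_derivative_iff_has_vector_derivative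
    by (rule integral_has_vector_derivative[OF cont that])
  have dg: "(g has_real_derivative g' u) (at u within {a..b})" if "u \<in> {a..b}" for u
    unfolding g_def g'_def
    apply (rule derivative_eq_intros refl dR[OF that])+
    using bpos by (simp add: field_simps)
  have axb: "{a..x} \<subseteq> {a..b}" using x by auto
  have ftc: "(g' has_integral (g x - g a)) {a..x}"
    apply (rule fundamental_theorem_of_calculus)
    using x apply simp
    apply (subst has_real_derivative_iff_has_vector_derivative[symmetric])
    apply (rule DERIV_subset[OF dg])
    using axb by auto
  have "g' u \<le> 0" if "u \<in> {a..x}" for u
    using le[of u] axb that unfolding g'_def R_def
    by (simp add: mult_nonpos_nonneg mult_le_0_iff)
  then have "g x - g a \<le> 0"
    using has_integral_le[OF ftc has_integral_0[of "{a..x}"]] by auto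
  moreover have "R a = 0" unfolding R_def by simp
  ultimately have "exp (- \<beta> * (x - a)) * (R x + \<alpha> / \<beta>) \<le> \<alpha> / \<beta>" unfolding g_def by simp
  moreover have "R x + \<alpha> / \<beta> = exp (\<beta> * (x - a)) * (exp (- \<beta> * (x - a)) * (R x + \<alpha> / \<beta>))"
    by (simp add: mult.assoc[symmetric] exp_add[symmetric])
  ultimately have "R x + \<alpha> / \<beta> \<le> exp (\<beta> * (x - a)) * (\<alpha> / \<beta>)"
    by (metis exp_ge_zero mult_left_mono)
  then have "\<beta> * (R x + \<alpha> / \<beta>) \<le> \<beta> * (exp (\<beta> * (x - a)) * (\<alpha> / \<beta>))"
    using bpos by (intro mult_left_mono) auto
  then have "\<beta> * R x + \<alpha> \<le> \<alpha> * exp (\<beta> * (x - a))"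
    using bpos by (simp add: distrib_left mult.commute)
  then show ?thesis using le[OF x] unfolding R_def by simp
qed

lemma gronwall_bwd:
  fixes \<phi> :: "real \<Rightarrow> real"
  assumes cont: "continuous_on {a..b} \<phi>" and bpos: "\<beta> > 0"
    and le: "\<And>x. x \<in> {a..b} \<Longrightarrow> \<phi> x \<le> \<alpha> + \<beta> * integral {x..b} \<phi>"
    and x: "x \<in> {a..b}"
  shows "\<phi> x \<le> \<alpha> * exp (\<beta> * (b - x))"
proof -
  define \<psi> where "\<psi> s = \<phi> (- s)" for s
  have c: "continuous_on {-b..-a} \<psi>" unfolding \<psi>_def
    by (rule continuous_on_compose2[OF cont]) (auto intro!: continuous_intros)
  have "\<psi> (-x) \<le> \<alpha> * exp (\<beta> * (-x - -b))"
  proof (rule gronwall_fwd[OF c bpos])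
    fix s assume s: "s \<in> {-b..-a}"
    have "integral {-b..s} \<psi> = integral {-s..b} \<phi>"
      unfolding \<psi>_def using Henstock_Kurzweil_Integration.integral_reflect_real[of b "-s" \<phi>] by simp
    then show "\<psi> s \<le> \<alpha> + \<beta> * integral {-b..s} \<psi>" using le[of "-s"] s unfolding \<psi>_def by auto
  qed (use x in auto)
  then show ?thesis unfolding \<psi>_def by simp
qed



lemma tri: "norm ((a::'a::real_normed_vector) - c) \<le> norm (a - b) + norm (b - c)"
  using norm_triangle_ineq[of "a - b" "b - c"] by simp

lemma ap_cont: "almost_periodic_real g \<Longrightarrow> continuous_on UNIV g"
  unfolding almost_periodic_real_def by simp

lemma ap_period:
  assumes "almost_periodic_real g" "e > 0"
  obtains l where "l > 0" "\<And>m. \<exists>\<tau>. m \<le> \<tau> \<and> \<tau> \<le> m + l \<and> (\<forall>t. norm (g (t + \<tau>) - g t) \<le> e)"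
  using assms unfolding almost_periodic_real_def rel_dense_real_def by fastforce

lemma ap_bounded:
  fixes g :: "real \<Rightarrow> 'a::real_normed_vector"
  assumes ap: "almost_periodic_real g"
  obtains M where "\<And>t. norm (g t) \<le> M"
proof -
  obtain l where l: "l > 0" "\<And>m. \<exists>\<tau>. m \<le> \<tau> \<and> \<tau> \<le> m + l \<and> (\<forall>t. norm (g (t + \<tau>) - g t) \<le> 1)"
    using ap_period[OF ap, of 1] by auto
  have "compact (g ` {0..l})"
    by (rule compact_continuous_image) (use ap_cont[OF ap] continuous_on_subset in auto)
  then obtain M0 where M0: "\<And>x. x \<in> {0..l} \<Longrightarrow> norm (g x) \<le> M0"
    by (meson bounded_iff compact_imp_bounded image_eqI)
  have "norm (g t) \<le> M0 + 1" for t
  proof -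
    obtain \<tau> where \<tau>: "-t \<le> \<tau>" "\<tau> \<le> -t + l" "\<forall>s. norm (g (s + \<tau>) - g s) \<le> 1" using l(2) by blast
    have "norm (g t) \<le> norm (g (t + \<tau>)) + norm (g (t + \<tau>) - g t)" by (metis norm_triangle_sub norm_minus_commute)
    also have "\<dots> \<le> M0 + 1" using M0[of "t + \<tau>"] \<tau> by (intro add_mono) auto
    finally show ?thesis .
  qed
  then show ?thesis using that by blast
qed

lemma ap_unif:
  fixes g :: "real \<Rightarrow> 'a::real_normed_vector"
  assumes ap: "almost_periodic_real g" and e: "e > 0"
  obtains d where "d > 0" "\<And>x y. \<bar>x - y\<bar> \<le> d \<Longrightarrow> norm (g x - g y) \<le> e"
proof -
  obtain l where l: "l > 0" "\<And>m. \<exists>\<tau>. m \<le> \<tau> \<and> \<tau> \<le> m + l \<and> (\<forall>t. norm (g (t + \<tau>) - g t) \<le> e/3)"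
    using ap_period[OF ap, of "e/3"] e by auto
  have "uniformly_continuous_on {-1..l+1} g"
    by (rule compact_uniformly_continuous) (use ap_cont[OF ap] continuous_on_subset in auto)
  then obtain d0 where d0: "d0 > 0" "\<And>x x'. x \<in> {-1..l+1} \<Longrightarrow> x' \<in> {-1..l+1} \<Longrightarrow> dist x' x < d0 \<Longrightarrow> dist (g x') (g x) < e/3"
    unfolding uniformly_continuous_on_def using e by (metis divide_pos_pos zero_less_numeral)
  define d where "d = min (d0/2) 1"
  have "d > 0" using d0 by (simp add: d_def)
  moreover have "norm (g x - g y) \<le> e" if "\<bar>x - y\<bar> \<le> d" for x y
  proof -
    obtain \<tau> where \<tau>: "-x \<le> \<tau>" "\<tau> \<le> -x + l" "\<forall>s. norm (g (s + \<tau>) - g s) \<le> e/3" using l(2) by blast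
    have xy: "\<bar>x - y\<bar> < d0" "\<bar>x - y\<bar> \<le> 1" using that d0 unfolding d_def by auto
    have "dist (g (y + \<tau>)) (g (x + \<tau>)) < e/3"
      apply (rule d0(2)) using \<tau> xy unfolding dist_real_def by (auto simp: abs_minus_commute abs_le_iff)
    then have a: "norm (g (x + \<tau>) - g (y + \<tau>)) \<le> e/3" by (simp add: dist_norm norm_minus_commute)
    have "norm (g x - g y) \<le> norm (g x - g (x + \<tau>)) + norm (g (x + \<tau>) - g (y + \<tau>)) + norm (g (y + \<tau>) - g y)"
      by (meson tri add_mono order_refl order.trans)
    also have "\<dots> \<le> e/3 + e/3 + e/3" using \<tau>(3) a by (intro add_mono) (auto simp: norm_minus_commute)
    finally show ?thesis by simp
  qed
  ultimately show ?thesis using that by blast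
qed

lemma ap_tb:
  fixes g :: "real \<Rightarrow> 'a::real_normed_vector"
  assumes ap: "almost_periodic_real g" and e: "e > 0"
  obtains F where "finite F" "\<And>r. \<exists>j\<in>F. \<forall>s. norm (g (s + r) - g (s + j)) \<le> e"
proof -
  obtain d where d: "d > 0" "\<And>x y. \<bar>x - y\<bar> \<le> d \<Longrightarrow> norm (g x - g y) \<le> e/2"
    using ap_unif[OF ap, of "e/2"] e by auto
  obtain l where l: "l > 0" "\<And>m. \<exists>\<tau>. m \<le> \<tau> \<and> \<tau> \<le> m + l \<and> (\<forall>t. norm (g (t + \<tau>) - g t) \<le> e/2)"
    using ap_period[OF ap, of "e/2"] e by auto
  define N where "N = nat (ceiling (l / d))"
  define F where "F = (\<lambda>k. real k * d) ` {..N}"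
  have "finite F" unfolding F_def by simp
  moreover have "\<exists>j\<in>F. \<forall>s. norm (g (s + r) - g (s + j)) \<le> e" for r
  proof -
    obtain \<tau> where \<tau>: "-r \<le> \<tau>" "\<tau> \<le> -r + l" "\<forall>s. norm (g (s + \<tau>) - g s) \<le> e/2" using l(2) by blast
    define k where "k = nat (floor ((r + \<tau>) / d))"
    define z where "z = (r + \<tau>) / d"
    have z0: "z \<ge> 0" and zl: "z \<le> l / d" unfolding z_def using \<tau> d by (auto intro: divide_right_mono)
    have kz: "real k = of_int (floor z)" unfolding k_def z_def[symmetric] using z0 by simp
    have rt: "r + \<tau> = z * d" unfolding z_def using d by simp
    have k1: "real k * d \<le> r + \<tau>" unfolding kz rt using d by (intro mult_right_mono) auto
    have k2: "r + \<tau> \<le> real k * d + d" unfolding kz rt using d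
      by (metis distrib_right less_eq_real_def mult_1 mult_right_mono real_of_int_floor_add_one_ge)
    have "floor z \<le> ceiling (l / d)" using zl by (meson floor_le_ceiling ceiling_mono order_trans)
    then have "k \<le> N" unfolding k_def N_def z_def[symmetric] by (simp add: nat_mono)
    then have kF: "real k * d \<in> F" unfolding F_def by auto
    have "norm (g (s + r) - g (s + real k * d)) \<le> e" for s
    proof -
      have "norm (g (s + r) - g (s + real k * d)) \<le> norm (g (s + r) - g (s + r + \<tau>)) + norm (g (s + r + \<tau>) - g (s + real k * d))"
        by (rule tri)
      also have "\<dots> \<le> e/2 + e/2"
        apply (intro add_mono)
        using \<tau>(3)[rule_format, of "s + r"] apply (simp add: norm_minus_commute add.assoc)
        apply (rule d(2)) using k1 k2 by auto
      finally show ?thesis by simp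
    qed
    then show ?thesis using kF by blast
  qed
  ultimately show ?thesis using that by blast
qed

lemma tb_combine:
  assumes "finite F1" "\<And>m. \<exists>y\<in>F1. R1 m y" "finite F2" "\<And>m. \<exists>y\<in>F2. R2 m y"
  shows "\<exists>F. finite F \<and> (\<forall>m. \<exists>j\<in>F. \<exists>y1 y2. R1 m y1 \<and> R1 j y1 \<and> R2 m y2 \<and> R2 j y2)"
proof -
  define S where "S = {p \<in> F1 \<times> F2. \<exists>j. R1 j (fst p) \<and> R2 j (snd p)}"
  define pick where "pick p = (SOME j. R1 j (fst p) \<and> R2 j (snd p))" for p
  have "finite (pick ` S)" unfolding S_def using assms by auto
  moreover have "\<exists>j\<in>pick ` S. \<exists>y1 y2. R1 m y1 \<and> R1 j y1 \<and> R2 m y2 \<and> R2 j y2" for m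
  proof -
    obtain y1 y2 where y: "y1 \<in> F1" "R1 m y1" "y2 \<in> F2" "R2 m y2" using assms by blast
    then have S: "(y1, y2) \<in> S" unfolding S_def by auto
    have "R1 (pick (y1,y2)) y1 \<and> R2 (pick (y1,y2)) y2"
      unfolding pick_def using someI_ex[of "\<lambda>j. R1 j y1 \<and> R2 j y2"] y by auto
    then show ?thesis using S y by blast
  qed
  ultimately show ?thesis by blast
qed

lemma z_bochner:
  fixes g :: "int \<Rightarrow> 'a::real_normed_vector" and k :: "int \<Rightarrow> 'b::real_normed_vector"
  assumes tb: "\<And>e. e > 0 \<Longrightarrow> \<exists>F. finite F \<and> (\<forall>m. \<exists>j\<in>F. \<forall>n. norm (g (n+m) - g (n+j)) \<le> e \<and> norm (k (n+m) - k (n+j)) \<le> e)"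
    and e: "e > 0"
  shows "rel_dense_int {T. \<forall>n. norm (g (n + T) - g n) \<le> e \<and> norm (k (n + T) - k n) \<le> e}"
proof -
  obtain F where F: "finite F" "\<And>m. \<exists>j\<in>F. \<forall>n. norm (g (n+m) - g (n+j)) \<le> e \<and> norm (k (n+m) - k (n+j)) \<le> e"
    using tb[OF e] by blast
  define L where "L = Max (abs ` F)"
  have L: "\<bar>j\<bar> \<le> L" if "j \<in> F" for j unfolding L_def using F(1) that by auto
  show ?thesis unfolding rel_dense_int_def
  proof (intro exI[of _ "2 * real_of_int L + 1"] conjI allI)
    obtain j0 where "j0 \<in> F" using F(2) by blast
    then show "0 < 2 * real_of_int L + 1" using L[of j0] by linarith
  next
    fix m0 :: real
    define M where "M = ceiling m0 + L"
    obtain j where j: "j \<in> F" "\<forall>n. norm (g (n + - M) - g (n + j)) \<le> e \<and> norm (k (n + - M) - k (n + j)) \<le> e"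
      using F(2)[of "-M"] by blast
    have "\<forall>n. norm (g (n + (M + j)) - g n) \<le> e \<and> norm (k (n + (M + j)) - k n) \<le> e"
    proof
      fix n
      show "norm (g (n + (M + j)) - g n) \<le> e \<and> norm (k (n + (M + j)) - k n) \<le> e"
        using j(2)[rule_format, of "n + M"] by (simp add: norm_minus_commute add.assoc)
    qed
    moreover have "m0 \<le> real_of_int (M + j) \<and> real_of_int (M + j) \<le> m0 + (2 * real_of_int L + 1)"
      using L[OF j(1)] unfolding M_def by (smt (verit) ceiling_correct of_int_add of_int_le_iff abs_le_iff)
    ultimately show "\<exists>x\<in>{T. \<forall>n. norm (g (n + T) - g n) \<le> e \<and> norm (k (n + T) - k n) \<le> e}.
         m0 \<le> real_of_int x \<and> real_of_int x \<le> m0 + (2 * real_of_int L + 1)" by blast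
  qed
qed

lemma zap_bounded:
  fixes g :: "int \<Rightarrow> 'a::real_normed_vector"
  assumes ap: "almost_periodic_int g"
  obtains M where "\<And>n. norm (g n) \<le> M"
proof -
  obtain l where l: "l > 0" "\<And>m::real. \<exists>x\<in>{\<tau>. \<forall>n. norm (g (n + \<tau>) - g n) \<le> 1}. m \<le> real_of_int x \<and> real_of_int x \<le> m + l"
    using ap unfolding almost_periodic_int_def rel_dense_int_def by (meson zero_less_one)
  define M0 where "M0 = Max ((\<lambda>i. norm (g i)) ` {0..ceiling l})"
  have M0: "norm (g i) \<le> M0" if "i \<in> {0..ceiling l}" for i
    unfolding M0_def using that by (intro Max_ge) auto
  have "norm (g n) \<le> M0 + 1" for n
  proof -
    obtain \<tau> where \<tau>: "\<forall>n. norm (g (n + \<tau>) - g n) \<le> 1" "-real_of_int n \<le> real_of_int \<tau>" "real_of_int \<tau> \<le> -real_of_int n + l"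
      using l(2)[of "-real_of_int n"] by auto
    have "n + \<tau> \<in> {0..ceiling l}" using \<tau>(2,3) by (auto simp: le_ceiling_iff)
    then have "norm (g (n + \<tau>)) \<le> M0" by (rule M0)
    moreover have "norm (g n) \<le> norm (g (n + \<tau>)) + norm (g (n + \<tau>) - g n)" by (metis norm_triangle_sub norm_minus_commute)
    ultimately show ?thesis using \<tau>(1) by smt
  qed
  then show ?thesis using that by blast
qed




locale ttseq =
  fixes tt :: "int \<Rightarrow> real"
  assumes tt_mono: "\<And>n. tt n < tt (n + 1)"
    and tt_top: "filterlim tt at_top at_top"
    and tt_bot: "filterlim tt at_bot at_bot"
    and tt_H2: "H2 tt"
begin

lemma tt_less_nat: "tt m < tt (m + int (Suc k))"
proof (induction k)
  case 0 then show ?case using tt_mono[of m] by simp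
next
  case (Suc k) then show ?case using tt_mono[of "m + int (Suc k)"] by (simp add: add.assoc)
qed

lemma tt_less: "m < n \<Longrightarrow> tt m < tt n"
  using tt_less_nat[of m "nat (n - m - 1)"] by simp

lemma tt_le: "m \<le> n \<Longrightarrow> tt m \<le> tt n"
  using tt_less[of m n] by (cases "m = n") auto

lemma tt_less_iff: "tt m < tt n \<longleftrightarrow> m < n"
  using tt_less tt_le by (meson linorder_not_le)

lemma tt_le_iff: "tt m \<le> tt n \<longleftrightarrow> m \<le> n"
  using tt_less tt_le by (meson linorder_not_le)

lemma tt_exists_le: "\<exists>n. tt n \<le> x"
proof -
  have "\<forall>\<^sub>F n in at_bot. tt n \<le> x" using tt_bot by (simp add: filterlim_at_bot)
  then obtain N where "\<And>n. n \<le> N \<Longrightarrow> tt n \<le> x" unfolding eventually_at_bot_linorder by blast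
  then show ?thesis by blast
qed

lemma tt_exists_gt: "\<exists>n. x < tt n"
proof -
  have "\<forall>\<^sub>F n in at_top. x + 1 \<le> tt n" using tt_top by (simp add: filterlim_at_top)
  then obtain N where "\<And>n. n \<ge> N \<Longrightarrow> x + 1 \<le> tt n" unfolding eventually_at_top_linorder by blast
  then show ?thesis by (meson less_add_one order_less_le_trans order_refl)
qed

lemma tt_locate: "\<exists>n. tt n \<le> x \<and> x < tt (n + 1)"
proof -
  obtain n0 where n0: "tt n0 \<le> x" using tt_exists_le by blast
  obtain n1 where n1: "x < tt n1" using tt_exists_gt by blast
  define S where "S = {n. n0 \<le> n \<and> tt n \<le> x}"
  have "S \<subseteq> {n0..n1}" unfolding S_def using n1 by (auto simp: tt_le_iff[symmetric] intro: order_trans)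
  then have fin: "finite S" by (rule finite_subset) simp
  have "n0 \<in> S" unfolding S_def using n0 by simp
  define n where "n = Max S"
  have "n \<in> S" unfolding n_def using fin \<open>n0 \<in> S\<close> by (intro Max_in) auto
  moreover have "\<not> tt (n + 1) \<le> x"
  proof
    assume "tt (n + 1) \<le> x"
    then have "n + 1 \<in> S" using \<open>n \<in> S\<close> unfolding S_def by simp
    then show False using Max_ge[OF fin, of "n+1"] unfolding n_def by simp
  qed
  ultimately show ?thesis unfolding S_def by auto
qed

lemma H2_get:
  assumes "e > 0"
  obtains l where "l > 0" "\<And>m::real. \<exists>T. m \<le> real_of_int T \<and> real_of_int T \<le> m + l \<and>
      (\<forall>n. \<forall>k. \<bar>tt (T + n + k) - tt (T + n) - (tt (n + k) - tt n)\<bar> \<le> e)"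
proof -
  obtain l where l: "l > 0" "\<And>m::real. \<exists>x\<in>(\<Inter>k\<in>{k::nat. k \<ge> 1}. {T. \<forall>n. \<bar>tk tt k (T + n) - tk tt k n\<bar> \<le> e}).
      m \<le> real_of_int x \<and> real_of_int x \<le> m + l"
    using tt_H2 assms unfolding H2_def rel_dense_int_def by meson
  show ?thesis
  proof (rule that[OF l(1)])
    fix m :: real
    obtain T where T: "T \<in> (\<Inter>k\<in>{k::nat. k \<ge> 1}. {T. \<forall>n. \<bar>tk tt k (T + n) - tk tt k n\<bar> \<le> e})"
      "m \<le> real_of_int T" "real_of_int T \<le> m + l" using l(2) by blast
    have "\<bar>tt (T + n + k) - tt (T + n) - (tt (n + k) - tt n)\<bar> \<le> e" for n k
    proof (cases "k > 0")
      case True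
      then have "\<bar>tk tt (nat k) (T + n) - tk tt (nat k) n\<bar> \<le> e" using T(1) by auto
      then show ?thesis using True unfolding tk_def by simp
    next
      case False
      show ?thesis
      proof (cases "k = 0")
        case True then show ?thesis using assms by simp
      next
        case False
        with \<open>\<not> k > 0\<close> have k: "-k > 0" by simp
        then have "\<bar>tk tt (nat (-k)) (T + (n + k)) - tk tt (nat (-k)) (n + k)\<bar> \<le> e" using T(1) by auto
        then show ?thesis using k unfolding tk_def by (simp add: add.assoc abs_minus_commute)
      qed
    qed
    then show "\<exists>T. m \<le> real_of_int T \<and> real_of_int T \<le> m + l \<and>
      (\<forall>n. \<forall>k. \<bar>tt (T + n + k) - tt (T + n) - (tt (n + k) - tt n)\<bar> \<le> e)" using T by blast
  qed
qed

lemma sigma_tb: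
  assumes "e > 0"
  obtains F where "finite F" "\<And>m. \<exists>j\<in>F. \<forall>n. \<bar>tt (n + m) - tt m - (tt (n + j) - tt j)\<bar> \<le> e"
proof -
  obtain l where l: "l > 0" "\<And>m::real. \<exists>T. m \<le> real_of_int T \<and> real_of_int T \<le> m + l \<and>
      (\<forall>n. \<forall>k. \<bar>tt (T + n + k) - tt (T + n) - (tt (n + k) - tt n)\<bar> \<le> e)"
    using H2_get[OF assms] by blast
  define F where "F = {0..ceiling l}"
  have "\<exists>j\<in>F. \<forall>n. \<bar>tt (n + m) - tt m - (tt (n + j) - tt j)\<bar> \<le> e" for m
  proof -
    obtain T where T: "- real_of_int m \<le> real_of_int T" "real_of_int T \<le> - real_of_int m + l"
      "\<forall>n. \<forall>k. \<bar>tt (T + n + k) - tt (T + n) - (tt (n + k) - tt n)\<bar> \<le> e"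
      using l(2)[of "- real_of_int m"] by blast
    have j: "m + T \<in> F" unfolding F_def using T(1,2) by (auto simp: le_ceiling_iff)
    have "\<bar>tt (n + m) - tt m - (tt (n + (m + T)) - tt (m + T))\<bar> \<le> e" for n
      using T(3)[rule_format, of m n] by (simp add: ac_simps abs_minus_commute)
    then show ?thesis using j by blast
  qed
  then show ?thesis using that[of F] unfolding F_def by blast
qed

lemma tt_bounds:
  obtains k0 :: nat and Lmax where "k0 \<ge> 1" "\<And>n. tt (n + int k0) \<ge> tt n + 1"
    "\<And>n. tt (n + 1) - tt n \<le> Lmax"
proof -
  obtain l where l: "l > 0" "\<And>m::real. \<exists>T. m \<le> real_of_int T \<and> real_of_int T \<le> m + l \<and>
      (\<forall>n. \<forall>k. \<bar>tt (T + n + k) - tt (T + n) - (tt (n + k) - tt n)\<bar> \<le> 1)"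
    using H2_get[of 1] by auto
  define W where "W = {0..ceiling l}"
  have fW: "finite W" unfolding W_def by simp
  have win: "\<exists>T. n + T \<in> W \<and> (\<forall>k. \<bar>tt (n + T + k) - tt (n + T) - (tt (n + k) - tt n)\<bar> \<le> 1)" for n
  proof -
    obtain T where T: "- real_of_int n \<le> real_of_int T" "real_of_int T \<le> - real_of_int n + l"
      "\<forall>n. \<forall>k. \<bar>tt (T + n + k) - tt (T + n) - (tt (n + k) - tt n)\<bar> \<le> 1"
      using l(2)[of "- real_of_int n"] by blast
    show ?thesis
    proof (intro exI[of _ T] conjI allI)
      show "n + T \<in> W" unfolding W_def using T(1,2) by (auto simp: le_ceiling_iff)
      fix k show "\<bar>tt (n + T + k) - tt (n + T) - (tt (n + k) - tt n)\<bar> \<le> 1"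
        using T(3)[rule_format, of n k] by (simp add: ac_simps)
    qed
  qed
  have "\<exists>k::nat. k \<ge> 1 \<and> tt (j + int k) \<ge> tt j + 2" for j
  proof -
    obtain N where N: "tt j + 2 < tt N" using tt_exists_gt by blast
    then have "N > j" using tt_less_iff by (smt (verit, best) tt_le_iff)
    then show ?thesis by (intro exI[of _ "nat (N - j)"]) (use N in auto)
  qed
  then obtain kk where kk: "\<And>j. kk j \<ge> 1" "\<And>j. tt (j + int (kk j)) \<ge> tt j + 2" by metis
  define k0 where "k0 = Max (kk ` W)"
  have k0: "kk j \<le> k0" if "j \<in> W" for j unfolding k0_def using fW that by auto
  have "0 \<in> W" unfolding W_def using l by auto
  then have "k0 \<ge> 1" using k0 kk(1)[of 0] by (meson order_trans)
  moreover have "tt (n + int k0) \<ge> tt n + 1" for n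
  proof -
    obtain T where T: "n + T \<in> W" "\<forall>k. \<bar>tt (n + T + k) - tt (n + T) - (tt (n + k) - tt n)\<bar> \<le> 1"
      using win by blast
    have "tt (n + T + int k0) \<ge> tt (n + T + int (kk (n + T)))" using k0[OF T(1)] by (simp add: tt_le_iff)
    then have "tt (n + T + int k0) \<ge> tt (n + T) + 2" using kk(2)[of "n + T"] by linarith
    then show ?thesis using T(2)[rule_format, of "int k0"] by linarith
  qed
  moreover define Lmax where "Lmax = Max ((\<lambda>j. tt (j + 1) - tt j) ` W) + 1"
  have "tt (n + 1) - tt n \<le> Lmax" for n
  proof -
    obtain T where T: "n + T \<in> W" "\<forall>k. \<bar>tt (n + T + k) - tt (n + T) - (tt (n + k) - tt n)\<bar> \<le> 1"
      using win by blast
    have "tt (n + T + 1) - tt (n + T) \<le> Max ((\<lambda>j. tt (j + 1) - tt j) ` W)" using fW T(1) by auto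
    then show ?thesis using T(2)[rule_format, of 1] unfolding Lmax_def by linarith
  qed
  ultimately show ?thesis using that by blast
qed


lemma f_ap:
  fixes f :: "real \<Rightarrow> 'a::real_normed_vector"
  assumes H3: "H3 tt f"
  shows "almost_periodic_real f"
proof -
  obtain k0 :: nat and Lmax where k0: "k0 \<ge> 1" "\<And>n. tt (n + int k0) \<ge> tt n + 1"
    "\<And>n. tt (n + 1) - tt n \<le> Lmax" using tt_bounds by metis
  have win: "m < n + int k0" if "n \<le> m" "tt m < tt n + 1" for n m
  proof (rule ccontr)
    assume "\<not> m < n + int k0"
    then have "tt m \<ge> tt (n + int k0)" by (simp add: tt_le_iff)
    then show False using k0(2)[of n] that by linarith
  qed
  have H3a: "\<And>e. e > 0 \<Longrightarrow> rel_dense_real {\<tau>. \<forall>t. t \<notin> (\<Union>n. {tt n - e <..< tt n + e}) \<longrightarrow> norm (f (t + \<tau>) - f t) \<le> e}"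
    and H3b: "\<And>e. e > 0 \<Longrightarrow> \<exists>\<delta>>0. \<forall>t' \<tau>' n. \<bar>\<tau>'\<bar> \<le> \<delta> \<and> t' \<in> {tt n..tt (n+1)} \<and> t' + \<tau>' \<in> {tt n..tt (n+1)}
                 \<longrightarrow> norm (f (t' + \<tau>') - f t') \<le> e"
    using H3 unfolding H3_def by auto
  have UC: "\<exists>d>0. \<forall>x y. \<bar>x - y\<bar> \<le> d \<longrightarrow> norm (f x - f y) \<le> (real k0 + 1) * e" if e: "e > 0" for e
  proof -
    obtain \<delta> where \<delta>: "\<delta> > 0" "\<And>t' \<tau>' n. \<bar>\<tau>'\<bar> \<le> \<delta> \<Longrightarrow> t' \<in> {tt n..tt (n+1)} \<Longrightarrow> t' + \<tau>' \<in> {tt n..tt (n+1)}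
                 \<Longrightarrow> norm (f (t' + \<tau>') - f t') \<le> e" using H3b[OF e] by blast
    have same: "norm (f b - f a) \<le> e" if "a \<in> {tt n..tt (n+1)}" "b \<in> {tt n..tt (n+1)}" "\<bar>b - a\<bar> \<le> \<delta>" for a b n
      using \<delta>(2)[of "b - a" a n] that by simp
    have chain: "\<forall>b. tt n \<le> a \<and> a \<le> tt (n+1) \<and> tt (n + int r) \<le> b \<and> b \<le> tt (n + int r + 1) \<and> a \<le> b \<and> b - a \<le> \<delta>
        \<longrightarrow> norm (f b - f a) \<le> (real r + 1) * e" for n a r
    proof (induction r)
      case 0 then show ?case using same[of a n] by auto
    next
      case (Suc r)
      show ?case
      proof (intro allI impI)
        fix b assume b: "tt n \<le> a \<and> a \<le> tt (n+1) \<and> tt (n + int (Suc r)) \<le> b \<and> b \<le> tt (n + int (Suc r) + 1) \<and> a \<le> b \<and> b - a \<le> \<delta>"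
        define p where "p = tt (n + int r + 1)"
        have ap: "a \<le> p" unfolding p_def using b tt_le[of "n+1" "n + int r + 1"] by linarith
        have pb: "p \<le> b" unfolding p_def using b by (simp add: ac_simps)
        have "norm (f p - f a) \<le> (real r + 1) * e"
          using Suc.IH[rule_format, of p] b ap pb tt_mono[of "n + int r"] unfolding p_def by auto
        moreover have "norm (f b - f p) \<le> e"
          apply (rule same[of p "n + int r + 1"]) using b pb ap unfolding p_def by (auto simp: ac_simps tt_le_iff)
        ultimately have "norm (f b - f a) \<le> (real r + 1) * e + e" using tri[of "f b" "f a" "f p"] by linarith
        then show "norm (f b - f a) \<le> (real (Suc r) + 1) * e" by (simp add: algebra_simps)
      qed
    qed
    define d where "d = min \<delta> (1/2)"
    have "norm (f x - f y) \<le> (real k0 + 1) * e" if xy: "\<bar>x - y\<bar> \<le> d" for x y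
    proof -
      have main: "norm (f y - f x) \<le> (real k0 + 1) * e" if "x \<le> y" "y - x \<le> d" for x y
      proof -
        obtain n where n: "tt n \<le> x" "x < tt (n + 1)" using tt_locate by blast
        obtain m where m: "tt m \<le> y" "y < tt (m + 1)" using tt_locate by blast
        have "tt n < tt (m + 1)" using n m that by linarith
        then have nm: "n \<le> m" by (simp add: tt_less_iff)
        define r where "r = nat (m - n)"
        have mr: "m = n + int r" unfolding r_def using nm by simp
        have "r \<le> k0"
        proof (cases "r = 0")
          case False
          then have "n + 1 \<le> m" using mr by simp
          moreover have "tt m < tt (n + 1) + 1" using m n that unfolding d_def by linarith
          ultimately have "m < n + 1 + int k0" using win by blast
          then show ?thesis using mr by simp
        qed simp
        have "norm (f y - f x) \<le> (real r + 1) * e"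
          using chain[of n x r] n m that unfolding d_def mr by (auto simp: add.assoc)
        also have "\<dots> \<le> (real k0 + 1) * e" using \<open>r \<le> k0\<close> e by (intro mult_right_mono) auto
        finally show ?thesis .
      qed
      show ?thesis
      proof (cases "x \<le> y")
        case True then show ?thesis using main[of x y] xy by (simp add: norm_minus_commute)
      next
        case False then show ?thesis using main[of y x] xy by simp
      qed
    qed
    moreover have "d > 0" unfolding d_def using \<delta> by simp
    ultimately show ?thesis by blast
  qed
  have cont: "continuous_on UNIV f"
    unfolding continuous_on_iff
  proof (intro ballI allI impI)
    fix x e :: real assume e: "e > 0"
    obtain d where d: "d > 0" "\<And>x y. \<bar>x - y\<bar> \<le> d \<Longrightarrow> norm (f x - f y) \<le> (real k0 + 1) * (e / (2 * (real k0 + 1)))"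
      using UC[of "e / (2 * (real k0 + 1))"] e by auto
    have "dist (f x') (f x) < e" if "dist x' x < d" for x'
    proof -
      have "norm (f x' - f x) \<le> (real k0 + 1) * (e / (2 * (real k0 + 1)))" using d(2)[of x' x] that by (simp add: dist_real_def)
      also have "\<dots> = e / 2"
      proof -
        have "real k0 + 1 > 0" by simp
        then show ?thesis by (simp add: field_simps)
      qed
      finally show ?thesis using e by (simp add: dist_norm)
    qed
    then show "\<exists>d>0. \<forall>x'\<in>UNIV. dist x' x < d \<longrightarrow> dist (f x') (f x) < e" using d(1) by blast
  qed
  have per: "rel_dense_real {\<tau>. \<forall>t. norm (f (t + \<tau>) - f t) \<le> \<eta>}" if \<eta>: "\<eta> > 0" for \<eta>
  proof -
    define e where "e = \<eta> / (3 * (real k0 + 1))"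
    have e: "e > 0" unfolding e_def using \<eta> by simp
    obtain d where d: "d > 0" "\<And>x y. \<bar>x - y\<bar> \<le> d \<Longrightarrow> norm (f x - f y) \<le> (real k0 + 1) * e"
      using UC[OF e] by auto
    have de: "(real k0 + 1) * e = \<eta> / 3"
    proof -
      have "real k0 + 1 > 0" by simp
      then show ?thesis unfolding e_def by (simp add: field_simps)
    qed
    define e' where "e' = min (\<eta>/3) (min d 1 / (2 * real k0 + 2))"
    have c: "2 * real k0 + 2 > 0" by simp
    have e'1: "e' \<le> min d 1 / (2 * real k0 + 2)" unfolding e'_def by simp
    have "(2 * real k0 + 2) * e' \<le> (2 * real k0 + 2) * (min d 1 / (2 * real k0 + 2))"
      by (rule mult_left_mono[OF e'1]) (use c in simp)
    also have "\<dots> = min d 1" using c by simp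
    finally have ce: "(2 * real k0 + 2) * e' \<le> min d 1" .
    have e': "e' > 0" "e' \<le> \<eta>/3" "(2 * real k0 + 2) * e' \<le> d" "(2 * real k0 + 2) * e' \<le> 1"
    proof -
      have "e' \<le> \<eta>/3" unfolding e'_def by (rule min.cobounded1)
      moreover have "e' > 0" unfolding e'_def using \<eta> d c by simp
      ultimately show "e' > 0" "e' \<le> \<eta>/3" "(2 * real k0 + 2) * e' \<le> d" "(2 * real k0 + 2) * e' \<le> 1"
        using ce by auto
    qed
    have good: "\<exists>s. \<bar>s - t\<bar> \<le> d \<and> s \<notin> (\<Union>n. {tt n - e' <..< tt n + e'})" for t
    proof (rule ccontr)
      assume "\<not> ?thesis"
      then have bad: "\<forall>i\<in>{..k0}. \<exists>n. t + 2 * real i * e' \<in> {tt n - e' <..< tt n + e'}"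
      proof (intro ballI)
        fix i assume i: "i \<in> {..k0}" and nb: "\<not> (\<exists>s. \<bar>s - t\<bar> \<le> d \<and> s \<notin> (\<Union>n. {tt n - e'<..<tt n + e'}))"
        have h1: "2 * real i * e' \<le> (2 * real k0 + 2) * e'" using i e' by (intro mult_right_mono) auto
        have h2: "0 \<le> 2 * real i * e'" using e' by simp
        have "\<bar>(t + 2 * real i * e') - t\<bar> = 2 * real i * e'" using h2 by simp
        then have "\<bar>(t + 2 * real i * e') - t\<bar> \<le> d" using h1 e'(3) by linarith
        then show "\<exists>n. t + 2 * real i * e' \<in> {tt n - e' <..< tt n + e'}" using nb by blast
      qed
      then obtain ni where ni: "\<And>i. i \<in> {..k0} \<Longrightarrow> t + 2 * real i * e' \<in> {tt (ni i) - e' <..< tt (ni i) + e'}"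
        by metis
      have inj: "inj_on ni {..k0}"
      proof (rule inj_onI)
        fix i j assume ij: "i \<in> {..k0}" "j \<in> {..k0}" "ni i = ni j"
        have "\<bar>2 * real i * e' - 2 * real j * e'\<bar> < 2 * e'" using ni[OF ij(1)] ni[OF ij(2)] ij(3) by auto
        moreover have "2 * real i * e' - 2 * real j * e' = (real i - real j) * (2 * e')" by (simp add: algebra_simps)
        moreover have "\<bar>(real i - real j) * (2 * e')\<bar> = \<bar>real i - real j\<bar> * (2 * e')" using e' by (simp add: abs_mult)
        ultimately have "\<bar>real i - real j\<bar> * (2 * e') < 1 * (2 * e')" by simp
        then have "\<bar>real i - real j\<bar> < 1" using e' by (meson mult_less_cancel_right_pos mult_pos_pos zero_less_numeral)
        then show "i = j" by linarith
      qed
      define N where "N = Min (ni ` {..k0})"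
      have NN: "N \<in> ni ` {..k0}" unfolding N_def by (intro Min_in) auto
      have sub: "ni ` {..k0} \<subseteq> {N..<N + int k0}"
      proof
        fix x assume x: "x \<in> ni ` {..k0}"
        then obtain i where i: "i \<in> {..k0}" "x = ni i" by blast
        obtain i0 where i0: "i0 \<in> {..k0}" "N = ni i0" using NN by blast
        have Nx: "N \<le> x" unfolding N_def using x by simp
        have "2 * real i * e' \<le> (2 * real k0) * e'" using i e' by (intro mult_right_mono) auto
        moreover have "0 \<le> 2 * real i0 * e'" using e' by simp
        moreover have "(2 * real k0 + 2) * e' = 2 * real k0 * e' + 2 * e'" by (simp add: algebra_simps)
        ultimately have "tt (ni i) < tt (ni i0) + 1" using ni[OF i(1)] ni[OF i0(1)] e'(4) by (simp only: greaterThanLessThan_iff) linarith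
        then have "tt x < tt N + 1" using i(2) i0(2) by simp
        then have "x < N + int k0" using win[OF Nx] by blast
        then show "x \<in> {N..<N + int k0}" using Nx by simp
      qed
      have "card {..k0} \<le> card {N..<N + int k0}" by (rule card_inj_on_le[OF inj sub]) simp
      then show False by simp
    qed
    define S where "S = {\<tau>. \<forall>t. t \<notin> (\<Union>n. {tt n - e' <..< tt n + e'}) \<longrightarrow> norm (f (t + \<tau>) - f t) \<le> e'}"
    have "rel_dense_real S" unfolding S_def by (rule H3a[OF e'(1)])
    then obtain l where l: "l > 0" "\<And>m. \<exists>\<tau>\<in>S. m \<le> \<tau> \<and> \<tau> \<le> m + l"
      unfolding rel_dense_real_def by blast
    have "\<forall>t. norm (f (t + \<tau>) - f t) \<le> \<eta>"
      if \<tau>: "\<forall>t. t \<notin> (\<Union>n. {tt n - e' <..< tt n + e'}) \<longrightarrow> norm (f (t + \<tau>) - f t) \<le> e'" for \<tau>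
    proof
      fix t
      obtain s where s: "\<bar>s - t\<bar> \<le> d" "s \<notin> (\<Union>n. {tt n - e' <..< tt n + e'})" using good by blast
      have "norm (f (t + \<tau>) - f t) \<le> norm (f (t + \<tau>) - f (s + \<tau>)) + norm (f (s + \<tau>) - f s) + norm (f s - f t)"
        by (meson tri add_mono order_refl order.trans)
      also have "\<dots> \<le> \<eta>/3 + \<eta>/3 + \<eta>/3"
        apply (intro add_mono)
        using d(2)[of "t + \<tau>" "s + \<tau>"] s de apply (simp add: abs_minus_commute)
        using \<tau> s e' apply auto[1]
        using d(2)[of s t] s de by simp
      finally show "norm (f (t + \<tau>) - f t) \<le> \<eta>" by simp
    qed
    then have sub: "S \<subseteq> {\<tau>. \<forall>t. norm (f (t + \<tau>) - f t) \<le> \<eta>}" unfolding S_def by blast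
    show ?thesis unfolding rel_dense_real_def
    proof (intro exI[of _ l] conjI allI)
      fix m show "\<exists>x\<in>{\<tau>. \<forall>t. norm (f (t + \<tau>) - f t) \<le> \<eta>}. m \<le> x \<and> x \<le> m + l"
        using l(2)[of m] sub by blast
    qed (rule l(1))
  qed
  show ?thesis unfolding almost_periodic_real_def using cont per by blast
qed

end



lemma int_bound_aff:
  fixes \<phi> :: "real \<Rightarrow> real"
  assumes "continuous_on {y..u} \<phi>" "y \<le> u"
  shows "integral {y..u} (\<lambda>v. a + \<beta> * \<phi> v) = a * (u - y) + \<beta> * integral {y..u} \<phi>"
proof -
  have i: "\<phi> integrable_on {y..u}" using assms integrable_continuous_real by blast
  have "integral {y..u} (\<lambda>v. a + \<beta> * \<phi> v) = integral {y..u} (\<lambda>v. a) + integral {y..u} (\<lambda>v. \<beta> * \<phi> v)"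
    by (rule Henstock_Kurzweil_Integration.integral_add) (auto intro!: integrable_continuous_real continuous_intros assms(1))
  also have "\<dots> = a * (u - y) + \<beta> * integral {y..u} \<phi>" using assms(2) by (simp add: mult.commute)
  finally show ?thesis .
qed

lemma lin_gronwall_fwd:
  fixes F g :: "real \<Rightarrow> 'a::banach"
  assumes cF: "continuous_on {y..y+L} F" and cg: "continuous_on {y..y+L} g" and b: "\<beta> > 0" and a: "a \<ge> 0"
    and eq: "\<And>u. u \<in> {y..y+L} \<Longrightarrow> F u = F0 + integral {y..u} g"
    and gb: "\<And>v. v \<in> {y..y+L} \<Longrightarrow> norm (g v) \<le> a + \<beta> * norm (F v)"
    and u: "u \<in> {y..y+L}"
  shows "norm (F u) \<le> (norm F0 + a * L) * exp (\<beta> * L)"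
proof -
  define \<phi> where "\<phi> v = norm (F v)" for v
  have c\<phi>: "continuous_on {y..y+L} \<phi>" unfolding \<phi>_def by (intro continuous_intros cF)
  have le: "\<phi> w \<le> (norm F0 + a * L) + \<beta> * integral {y..w} \<phi>" if w: "w \<in> {y..y+L}" for w
  proof -
    have sub: "{y..w} \<subseteq> {y..y+L}" using w by auto
    have ig: "g integrable_on {y..w}" by (rule integrable_continuous_real) (use cg sub continuous_on_subset in blast)
    have c\<phi>w: "continuous_on {y..w} \<phi>" using c\<phi> sub continuous_on_subset by blast
    have i2: "(\<lambda>v. a + \<beta> * \<phi> v) integrable_on {y..w}"
      by (rule integrable_continuous_real) (intro continuous_intros c\<phi>w)
    have "\<phi> w \<le> norm F0 + norm (integral {y..w} g)" unfolding \<phi>_def eq[OF w] by (rule norm_triangle_ineq)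
    also have "norm (integral {y..w} g) \<le> integral {y..w} (\<lambda>v. a + \<beta> * \<phi> v)"
      by (rule integral_norm_bound_integral[OF ig i2]) (use gb sub in \<open>auto simp: \<phi>_def\<close>)
    also have "\<dots> = a * (w - y) + \<beta> * integral {y..w} \<phi>" using w by (intro int_bound_aff c\<phi>w) auto
    also have "a * (w - y) \<le> a * L" using w a by (intro mult_left_mono) auto
    finally show ?thesis by linarith
  qed
  have "\<phi> u \<le> (norm F0 + a * L) * exp (\<beta> * (u - y))"
    by (rule gronwall_fwd[OF c\<phi> b le u])
  also have "\<dots> \<le> (norm F0 + a * L) * exp (\<beta> * L)"
    using u b a by (intro mult_left_mono) (auto intro!: mult_left_mono simp: add_nonneg_nonneg)
  finally show ?thesis unfolding \<phi>_def .
qed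

lemma lin_gronwall_bwd:
  fixes F g :: "real \<Rightarrow> 'a::banach"
  assumes cF: "continuous_on {y-L..y} F" and cg: "continuous_on {y-L..y} g" and b: "\<beta> > 0" and a: "a \<ge> 0"
    and eq: "\<And>u. u \<in> {y-L..y} \<Longrightarrow> F u = F0 - integral {u..y} g"
    and gb: "\<And>v. v \<in> {y-L..y} \<Longrightarrow> norm (g v) \<le> a + \<beta> * norm (F v)"
    and u: "u \<in> {y-L..y}"
  shows "norm (F u) \<le> (norm F0 + a * L) * exp (\<beta> * L)"
proof -
  define \<phi> where "\<phi> v = norm (F v)" for v
  have c\<phi>: "continuous_on {y-L..y} \<phi>" unfolding \<phi>_def by (intro continuous_intros cF)
  have le: "\<phi> w \<le> (norm F0 + a * L) + \<beta> * integral {w..y} \<phi>" if w: "w \<in> {y-L..y}" for w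
  proof -
    have sub: "{w..y} \<subseteq> {y-L..y}" using w by auto
    have ig: "g integrable_on {w..y}" by (rule integrable_continuous_real) (use cg sub continuous_on_subset in blast)
    have c\<phi>w: "continuous_on {w..y} \<phi>" using c\<phi> sub continuous_on_subset by blast
    have i2: "(\<lambda>v. a + \<beta> * \<phi> v) integrable_on {w..y}"
      by (rule integrable_continuous_real) (intro continuous_intros c\<phi>w)
    have "\<phi> w \<le> norm F0 + norm (integral {w..y} g)" unfolding \<phi>_def eq[OF w] by (rule norm_triangle_ineq4)
    also have "norm (integral {w..y} g) \<le> integral {w..y} (\<lambda>v. a + \<beta> * \<phi> v)"
      by (rule integral_norm_bound_integral[OF ig i2]) (use gb sub in \<open>auto simp: \<phi>_def\<close>)
    also have "\<dots> = a * (y - w) + \<beta> * integral {w..y} \<phi>" using w by (intro int_bound_aff c\<phi>w) auto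
    also have "a * (y - w) \<le> a * L" using w a by (intro mult_left_mono) auto
    finally show ?thesis by linarith
  qed
  have "\<phi> u \<le> (norm F0 + a * L) * exp (\<beta> * (y - u))"
    by (rule gronwall_bwd[OF c\<phi> b le u])
  also have "\<dots> \<le> (norm F0 + a * L) * exp (\<beta> * L)"
    using u b a by (intro mult_left_mono) (auto intro!: mult_left_mono simp: add_nonneg_nonneg)
  finally show ?thesis unfolding \<phi>_def .
qed


lemma bl_right_mult: "bounded_linear (\<lambda>M::complex^'n^'m. M ** (C::complex^'k^'n))"
  by (rule bounded_bilinear.bounded_linear_left[OF bb_mm])

lemma bl_left_mult: "bounded_linear (\<lambda>M::complex^'k^'n. (C::complex^'n^'m) ** M)"
  by (rule bounded_bilinear.bounded_linear_right[OF bb_mm])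

lemma cont_mm [continuous_intros]:
  fixes f :: "real \<Rightarrow> complex^'n^'m" and g :: "real \<Rightarrow> complex^'k^'n"
  shows "continuous_on S f \<Longrightarrow> continuous_on S g \<Longrightarrow> continuous_on S (\<lambda>x. f x ** g x)"
  by (rule bounded_bilinear.continuous_on[OF bb_mm])

lemma cont_mv [continuous_intros]:
  fixes f :: "real \<Rightarrow> complex^'n^'m" and g :: "real \<Rightarrow> complex^'n"
  shows "continuous_on S f \<Longrightarrow> continuous_on S g \<Longrightarrow> continuous_on S (\<lambda>x. f x *v g x)"
  by (rule bounded_bilinear.continuous_on[OF bb_mv])

lemma integral_shift_add:
  fixes h :: "real \<Rightarrow> 'a::real_normed_vector"
  shows "integral {y..u} (\<lambda>v. h (v + c)) = integral {y + c..u + c} h"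
  using integral_shift_real_ivl[of "y + c" c "u + c" h] by simp


lemma int_len_bound:
  fixes g :: "real \<Rightarrow> 'a::banach"
  assumes c: "continuous_on {a..b} g" and b: "\<And>v. v \<in> {a..b} \<Longrightarrow> norm (g v) \<le> K" and ab: "a \<le> b"
  shows "norm (integral {a..b} g) \<le> K * (b - a)"
proof -
  have "norm (g a) \<le> K" using b[of a] ab by simp
  then have K: "0 \<le> K" using norm_ge_zero order.trans by blast
  have hi: "(g has_integral integral {a..b} g) (cbox a b)"
    using integrable_continuous_real[OF c] by (simp add: has_integral_integral)
  have bb: "\<And>x. x \<in> cbox a b \<Longrightarrow> norm (g x) \<le> K" using b by simp
  from has_integral_bound[OF K hi bb] ab show ?thesis by simp
qed

lemma int_diff_len:
  fixes g :: "real \<Rightarrow> 'a::banach"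
  assumes c: "continuous_on {a..a+Lm} g" and b: "\<And>v. v \<in> {a..a+Lm} \<Longrightarrow> norm (g v) \<le> K"
    and L: "0 \<le> L" "L \<le> Lm" "0 \<le> L'" "L' \<le> Lm"
  shows "norm (integral {a..a+L} g - integral {a..a+L'} g) \<le> K * \<bar>L - L'\<bar>"
proof -
  have main: "norm (integral {a..a+L2} g - integral {a..a+L1} g) \<le> K * (L2 - L1)"
    if l: "0 \<le> L1" "L1 \<le> L2" "L2 \<le> Lm" for L1 L2
  proof -
    have sub: "{a..a+L2} \<subseteq> {a..a+Lm}" using l by auto
    have i: "g integrable_on {a..a+L2}"
      by (rule integrable_continuous_real) (use c sub continuous_on_subset in blast)
    have "integral {a..a+L1} g + integral {a+L1..a+L2} g = integral {a..a+L2} g"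
      by (rule Henstock_Kurzweil_Integration.integral_combine) (use l i in auto)
    then have "integral {a..a+L2} g - integral {a..a+L1} g = integral {a+L1..a+L2} g" by (simp add: algebra_simps)
    also have "norm \<dots> \<le> K * ((a + L2) - (a + L1))"
      by (rule int_len_bound) (use c l continuous_on_subset b in \<open>auto intro: continuous_on_subset[OF c]\<close>)
    finally show ?thesis by simp
  qed
  show ?thesis
  proof (cases "L \<le> L'")
    case True then show ?thesis using main[of L L'] L by (simp add: norm_minus_commute)
  next
    case False then show ?thesis using main[of L' L] L by simp
  qed
qed

locale fundX =
  fixes A X :: "real \<Rightarrow> complex^'q^'q"
  assumes X_fund: "fundamental_matrix A X" and A_ap: "almost_periodic_real A"
begin

definition MA where "MA = (SOME M. \<forall>t. norm (A t) \<le> M)"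

lemma MA: "norm (A t) \<le> MA"
proof -
  obtain M where "\<And>t. norm (A t) \<le> M" using ap_bounded[OF A_ap] by blast
  then have "\<exists>M. \<forall>t. norm (A t) \<le> M" by blast
  from someI_ex[OF this] show ?thesis unfolding MA_def by blast
qed

lemma MA0: "MA \<ge> 0" using MA[of 0] norm_ge_zero order_trans by blast

lemma A_cont: "continuous_on S A"
  using ap_cont[OF A_ap] continuous_on_subset by blast

lemma X_inv: "invertible (X t)" using X_fund unfolding fundamental_matrix_def by blast

lemma X_int: "s \<le> t \<Longrightarrow> ((\<lambda>u. A u ** X u) has_integral (X t - X s)) {s..t}"
  using X_fund unfolding fundamental_matrix_def by blast

lemma X_cont: "continuous_on S X"
proof -
  have "isCont X t" for t
  proof -
    have int: "(\<lambda>u. A u ** X u) integrable_on {t-1..t+1}" using X_int[of "t-1" "t+1"] by auto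
    have eq: "X x = X (t-1) + integral {t-1..x} (\<lambda>u. A u ** X u)" if "x \<in> {t-1..t+1}" for x
      using X_int[of "t-1" x] that by (simp add: integral_unique)
    have "continuous_on {t-1..t+1} (\<lambda>x. X (t-1) + integral {t-1..x} (\<lambda>u. A u ** X u))"
      by (intro continuous_intros indefinite_integral_continuous_1 int)
    then have "continuous_on {t-1..t+1} X" using eq continuous_on_cong by (metis (no_types, lifting))
    then show ?thesis by (rule continuous_on_interior) auto
  qed
  then show ?thesis by (simp add: continuous_at_imp_continuous_on)
qed

lemma P_same: "Xts X x x = mat 1"
  unfolding Xts_def using minv[OF X_inv] by simp

lemma P_comp: "Xts X x y ** Xts X y z = Xts X x z"
proof -
  have "Xts X x y ** Xts X y z = X x ** (matrix_inv (X y) ** X y) ** matrix_inv (X z)"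
    unfolding Xts_def by (simp add: matrix_mul_assoc)
  then show ?thesis using minv[OF X_inv] unfolding Xts_def by simp
qed

lemma P_cont1: "continuous_on S (\<lambda>u. Xts X u y)"
  unfolding Xts_def by (intro continuous_intros X_cont)

lemma AP_cont: "continuous_on S (\<lambda>u. A u ** Xts X u y)"
  by (intro continuous_intros A_cont P_cont1)

lemma P_ie: "x \<le> x' \<Longrightarrow> ((\<lambda>u. A u ** Xts X u y) has_integral (Xts X x' y - Xts X x y)) {x..x'}"
proof -
  assume "x \<le> x'"
  from has_integral_linear[OF X_int[OF this] bl_right_mult[of "matrix_inv (X y)"]]
  have "((\<lambda>u. (A u ** X u) ** matrix_inv (X y)) has_integral ((X x' - X x) ** matrix_inv (X y))) {x..x'}"
    by (simp add: o_def)
  moreover have "(X x' - X x) ** matrix_inv (X y) = Xts X x' y - Xts X x y"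
    unfolding Xts_def by (rule bounded_bilinear.diff_left[OF bb_mm])
  ultimately show ?thesis unfolding Xts_def by (simp add: matrix_mul_assoc)
qed

lemma P_fwd: "y \<le> u \<Longrightarrow> Xts X u y = mat 1 + integral {y..u} (\<lambda>v. A v ** Xts X v y)"
  using P_ie[of y u y] P_same by (simp add: integral_unique)

lemma P_bwd: "u \<le> y \<Longrightarrow> Xts X u y = mat 1 - integral {u..y} (\<lambda>v. A v ** Xts X v y)"
  using P_ie[of u y y] P_same by (simp add: integral_unique)

definition Mb where "Mb L = sqrt (CARD('q)) * exp ((MA + 1) * L)"

lemma Mb_pos: "Mb L > 0" unfolding Mb_def by simp

lemma norm_AP: "norm (A v ** M) \<le> 0 + (MA + 1) * norm M"
proof -
  have "norm (A v ** M) \<le> norm (A v) * norm M" by (rule norm_mm)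
  also have "\<dots> \<le> MA * norm M" by (intro mult_right_mono MA) simp
  also have "\<dots> \<le> (MA + 1) * norm M" by (intro mult_right_mono) auto
  finally show ?thesis by simp
qed

lemma P_bound: "\<bar>x - y\<bar> \<le> L \<Longrightarrow> norm (Xts X x y) \<le> Mb L"
proof -
  assume xy: "\<bar>x - y\<bar> \<le> L"
  have b: "MA + 1 > 0" using MA0 by simp
  show ?thesis
  proof (cases "y \<le> x")
    case True
    have "norm (Xts X x y) \<le> (norm (mat 1 :: complex^'q^'q) + 0 * L) * exp ((MA + 1) * L)"
      by (rule lin_gronwall_fwd[OF P_cont1 AP_cont b order_refl P_fwd norm_AP]) (use True xy in auto)
    then show ?thesis unfolding Mb_def norm_mat1 by simp
  next
    case False
    have "norm (Xts X x y) \<le> (norm (mat 1 :: complex^'q^'q) + 0 * L) * exp ((MA + 1) * L)"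
      by (rule lin_gronwall_bwd[OF P_cont1 AP_cont b order_refl P_bwd norm_AP]) (use False xy in auto)
    then show ?thesis unfolding Mb_def norm_mat1 by simp
  qed
qed

lemma P_lip1:
  assumes "\<bar>x - y\<bar> \<le> L" "\<bar>x' - y\<bar> \<le> L"
  shows "norm (Xts X x y - Xts X x' y) \<le> MA * Mb L * \<bar>x - x'\<bar>"
proof -
  have main: "norm (Xts X x' y - Xts X x y) \<le> MA * Mb L * (x' - x)"
    if xx: "x \<le> x'" "\<bar>x - y\<bar> \<le> L" "\<bar>x' - y\<bar> \<le> L" for x x'
  proof -
    have bd: "norm (A u ** Xts X u y) \<le> MA * Mb L" if u: "u \<in> cbox x x'" for u
    proof -
      have "norm (A u ** Xts X u y) \<le> norm (A u) * norm (Xts X u y)" by (rule norm_mm)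
      also have "\<dots> \<le> MA * Mb L"
        using u xx by (intro mult_mono MA P_bound) (auto simp: MA0 abs_le_iff)
      finally show ?thesis .
    qed
    have hi: "((\<lambda>u. A u ** Xts X u y) has_integral Xts X x' y - Xts X x y) (cbox x x')"
      using P_ie[OF xx(1)] by simp
    have "0 \<le> MA * Mb L" using MA0 Mb_pos[of L] by simp
    from has_integral_bound[OF this hi bd] show ?thesis using xx by simp
  qed
  show ?thesis
  proof (cases "x \<le> x'")
    case True then show ?thesis using main[OF True assms] by (simp add: norm_minus_commute)
  next
    case False then show ?thesis using main[of x' x] assms by simp
  qed
qed

lemma P_shift:
  assumes th: "\<And>u. norm (A u - A (u + c)) \<le> \<theta>" and xy: "\<bar>x - y\<bar> \<le> L"
  shows "norm (Xts X x y - Xts X (x + c) (y + c)) \<le> \<theta> * Mb L * L * exp ((MA + 1) * L)"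
proof -
  have b: "MA + 1 > 0" using MA0 by simp
  have th0: "\<theta> \<ge> 0" using th[of 0] norm_ge_zero order_trans by blast
  have cAc: "continuous_on S (\<lambda>v. A (v + c))" for S
    by (rule continuous_on_compose2[OF A_cont[of UNIV]]) (auto intro!: continuous_intros)
  have cPc: "continuous_on S (\<lambda>v. Xts X (v + c) (y + c))" for S
    by (rule continuous_on_compose2[OF P_cont1[of UNIV]]) (auto intro!: continuous_intros)
  define F where "F u = Xts X u y - Xts X (u + c) (y + c)" for u
  define g where "g v = A v ** Xts X v y - A (v + c) ** Xts X (v + c) (y + c)" for v
  have cF: "continuous_on S F" for S unfolding F_def
    by (intro continuous_intros P_cont1 cPc)
  have cg: "continuous_on S g" for S unfolding g_def
    by (intro continuous_intros AP_cont cAc cPc)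
  have gb: "norm (g v) \<le> \<theta> * Mb L + (MA + 1) * norm (F v)" if "\<bar>v - y\<bar> \<le> L" for v
  proof -
    have "g v = (A v - A (v + c)) ** Xts X v y + A (v + c) ** F v"
      unfolding g_def F_def by (simp add: bounded_bilinear.diff_left[OF bb_mm] bounded_bilinear.diff_right[OF bb_mm])
    then have "norm (g v) \<le> norm ((A v - A (v + c)) ** Xts X v y) + norm (A (v + c) ** F v)"
      by (simp add: norm_triangle_ineq)
    also have "norm ((A v - A (v + c)) ** Xts X v y) \<le> \<theta> * Mb L"
      using norm_mm[of "A v - A (v + c)" "Xts X v y"] th[of v] P_bound[OF that]
      by (smt (verit) mult_mono norm_ge_zero)
    also have "norm (A (v + c) ** F v) \<le> 0 + (MA + 1) * norm (F v)" by (rule norm_AP)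
    finally show ?thesis by simp
  qed
  have int1: "integral {a..b} (\<lambda>v. A v ** Xts X v y) = Xts X b y - Xts X a y" if "a \<le> b" for a b
    using P_ie[OF that] by (simp add: integral_unique)
  have int2: "integral {a..b} (\<lambda>v. A (v + c) ** Xts X (v + c) (y + c)) = Xts X (b + c) (y + c) - Xts X (a + c) (y + c)" if "a \<le> b" for a b
    using integral_shift_add[where h = "\<lambda>w. A w ** Xts X w (y + c)" and y = a and u = b and c = c] P_ie[of "a + c" "b + c" "y + c"] that
    by (simp add: integral_unique)
  have gint: "integral {a..b} g = integral {a..b} (\<lambda>v. A v ** Xts X v y) - integral {a..b} (\<lambda>v. A (v + c) ** Xts X (v + c) (y + c))" for a b
    unfolding g_def
    by (rule Henstock_Kurzweil_Integration.integral_diff)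
       (auto intro!: integrable_continuous_real AP_cont cAc cPc continuous_intros)
  show ?thesis
  proof (cases "y \<le> x")
    case True
    have "norm (F x) \<le> (norm (0::complex^'q^'q) + (\<theta> * Mb L) * L) * exp ((MA + 1) * L)"
    proof (rule lin_gronwall_fwd[OF cF cg b])
      show "0 \<le> \<theta> * Mb L" using th0 Mb_pos[of L] by simp
      fix u assume u: "u \<in> {y..y+L}"
      show "F u = 0 + integral {y..u} g" unfolding gint F_def using int1[of y u] int2[of y u] u by (simp add: P_same)
    next
      fix v assume "v \<in> {y..y+L}" then show "norm (g v) \<le> \<theta> * Mb L + (MA + 1) * norm (F v)" by (intro gb) auto
    qed (use True xy in auto)
    then show ?thesis unfolding F_def by (simp add: mult.assoc)
  next
    case False
    have "norm (F x) \<le> (norm (0::complex^'q^'q) + (\<theta> * Mb L) * L) * exp ((MA + 1) * L)"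
    proof (rule lin_gronwall_bwd[OF cF cg b])
      show "0 \<le> \<theta> * Mb L" using th0 Mb_pos[of L] by simp
      fix u assume u: "u \<in> {y-L..y}"
      show "F u = 0 - integral {u..y} g" unfolding gint F_def using int1[of u y] int2[of u y] u by (simp add: P_same)
    next
      fix v assume "v \<in> {y-L..y}" then show "norm (g v) \<le> \<theta> * Mb L + (MA + 1) * norm (F v)" by (intro gb) auto
    qed (use False xy in auto)
    then show ?thesis unfolding F_def by (simp add: mult.assoc)
  qed
qed


lemma Xinv_cont: "continuous_on S (\<lambda>u. matrix_inv (X u))"
proof -
  have "isCont (\<lambda>u. matrix_inv (X u)) u0" for u0
  proof -
    define C0 where "C0 = norm (matrix_inv (X u0))"
    have key: "norm (matrix_inv (X u) - matrix_inv (X u0)) \<le> Mb 1 * C0 * C0 * norm (X u0 - X u)"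
      if "\<bar>u - u0\<bar> \<le> 1" for u
    proof -
      have e1: "matrix_inv (X u) = matrix_inv (X u0) ** Xts X u0 u"
        unfolding Xts_def by (simp add: matrix_mul_assoc minv[OF X_inv])
      have m1: "matrix_inv (X u) ** X u = mat 1" "X u0 ** matrix_inv (X u0) = mat 1" using minv[OF X_inv] by auto
      have "matrix_inv (X u) ** (X u0 - X u) = matrix_inv (X u) ** X u0 - mat 1"
        using bounded_bilinear.diff_right[OF bb_mm, of "matrix_inv (X u)" "X u0" "X u"] m1 by simp
      then have "matrix_inv (X u) ** (X u0 - X u) ** matrix_inv (X u0) = (matrix_inv (X u) ** X u0) ** matrix_inv (X u0) - matrix_inv (X u0)"
        using bounded_bilinear.diff_left[OF bb_mm, of "matrix_inv (X u) ** X u0" "mat 1" "matrix_inv (X u0)"] by simp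
      also have "(matrix_inv (X u) ** X u0) ** matrix_inv (X u0) = matrix_inv (X u)"
        using m1(2) by (simp add: matrix_mul_assoc[symmetric])
      finally have e2: "matrix_inv (X u) - matrix_inv (X u0) = matrix_inv (X u) ** (X u0 - X u) ** matrix_inv (X u0)" by simp
      have n0: "norm (matrix_inv (X u)) \<le> C0 * norm (Xts X u0 u)"
        unfolding e1 C0_def by (rule norm_mm)
      have n1: "norm (matrix_inv (X u)) \<le> C0 * Mb 1"
        using n0 P_bound[of u0 u 1] that by (smt (verit, best) mult_left_mono norm_ge_zero C0_def abs_minus_commute)
      have "norm (matrix_inv (X u) - matrix_inv (X u0)) \<le> norm (matrix_inv (X u)) * norm (X u0 - X u) * C0"
        unfolding e2 C0_def by (meson norm_mm mult_right_mono norm_ge_zero order_trans)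
      also have "\<dots> \<le> C0 * Mb 1 * norm (X u0 - X u) * C0"
        using n1 by (intro mult_right_mono) (auto simp: C0_def)
      finally show ?thesis by (simp add: ac_simps)
    qed
    have ev: "\<forall>\<^sub>F u in at u0. norm (matrix_inv (X u) - matrix_inv (X u0)) \<le> Mb 1 * C0 * C0 * norm (X u0 - X u)"
      unfolding eventually_at by (intro exI[of _ 1]) (auto intro!: key simp: dist_real_def)
    have "isCont X u0" using X_cont[of UNIV] by (simp add: continuous_on_eq_continuous_at)
    then have "(X \<longlongrightarrow> X u0) (at u0)" by (simp add: isCont_def)
    then have "((\<lambda>u. Mb 1 * C0 * C0 * norm (X u0 - X u)) \<longlongrightarrow> Mb 1 * C0 * C0 * norm (X u0 - X u0)) (at u0)"
      by (intro tendsto_intros)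
    then have "((\<lambda>u. Mb 1 * C0 * C0 * norm (X u0 - X u)) \<longlongrightarrow> 0) (at u0)" by simp
    from Lim_null_comparison[OF ev this] show ?thesis
      by (simp add: isCont_def Lim_null[symmetric])
  qed
  then show ?thesis by (simp add: continuous_at_imp_continuous_on)
qed

lemma P_cont2: "continuous_on S (\<lambda>u. Xts X x u)"
  unfolding Xts_def by (intro continuous_intros Xinv_cont)

end



lemma norm_prod_diff:
  fixes U U' J J' :: "complex^'q^'q"
  shows "norm (U ** J - U' ** J') \<le> norm (U - U') * norm J + norm U' * norm (J - J')"
proof -
  have "U ** J - U' ** J' = (U - U') ** J + U' ** (J - J')"
    by (simp add: bounded_bilinear.diff_left[OF bb_mm] bounded_bilinear.diff_right[OF bb_mm])
  then show ?thesis by (metis norm_triangle_le add_mono norm_mm)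
qed

lemma norm_prod_diff_v:
  fixes U U' :: "complex^'q^'q" and J J' :: "complex^'q"
  shows "norm (U *v J - U' *v J') \<le> norm (U - U') * norm J + norm U' * norm (J - J')"
proof -
  have "U *v J - U' *v J' = (U - U') *v J + U' *v (J - J')"
    by (simp add: bounded_bilinear.diff_left[OF bb_mv] bounded_bilinear.diff_right[OF bb_mv])
  then show ?thesis by (metis norm_triangle_le add_mono norm_mv)
qed

context fundX
begin

definition Hloc :: "(real \<Rightarrow> complex^'q^'q) \<Rightarrow> real \<Rightarrow> real \<Rightarrow> complex^'q^'q" where
  "Hloc B a L = Xts X (a + L) a ** (mat 1 + integral {a..a+L} (\<lambda>u. Xts X a u ** B u))"

definition hloc :: "(real \<Rightarrow> complex^'q) \<Rightarrow> real \<Rightarrow> real \<Rightarrow> complex^'q" where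
  "hloc f a L = integral {a..a+L} (\<lambda>u. Xts X (a + L) u *v f u)"

lemma Hmat_loc: "Hmat X B tt n = Hloc B (tt n) (tt (n + 1) - tt n)"
  unfolding Hmat_def Zmat_def Jmat_def Hloc_def by simp

lemma hvec_loc: "hvec X f tt n = hloc f (tt n) (tt (n + 1) - tt n)"
  unfolding hvec_def hloc_def by simp

definition E2 where "E2 Lm = Mb Lm * Lm * exp ((MA + 1) * Lm)"

lemma P_shift': "(\<And>u. norm (A u - A (u + c)) \<le> \<theta>) \<Longrightarrow> \<bar>x - y\<bar> \<le> Lm \<Longrightarrow>
   norm (Xts X x y - Xts X (x + c) (y + c)) \<le> \<theta> * E2 Lm"
  using P_shift[of c \<theta> x y Lm] unfolding E2_def by (simp add: mult.assoc)

definition KH where "KH Lm MB = (E2 Lm + MA * Mb Lm) * (sqrt (CARD('q)) + Lm * Mb Lm * MB) + Mb Lm * (Lm * (E2 Lm * MB + Mb Lm) + Mb Lm * MB)"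

definition Kh where "Kh Lm Mf = Lm * ((E2 Lm + MA * Mb Lm) * Mf + Mb Lm) + Mb Lm * Mf"

lemma E2_nonneg: "Lm \<ge> 0 \<Longrightarrow> E2 Lm \<ge> 0" unfolding E2_def using Mb_pos[of Lm] by simp

lemma H_dep:
  fixes B :: "real \<Rightarrow> complex^'q^'q"
  assumes Bc: "continuous_on UNIV B" and MB: "\<And>u. norm (B u) \<le> MB"
    and L: "0 \<le> L" "L \<le> Lm" "0 \<le> L'" "L' \<le> Lm"
    and thA: "\<And>u. norm (A u - A (u + c)) \<le> \<theta>" and thB: "\<And>u. norm (B u - B (u + c)) \<le> \<theta>"
    and dl: "\<bar>L - L'\<bar> \<le> \<delta>"
  shows "norm (Hloc B a L - Hloc B (a + c) L') \<le> KH Lm MB * (\<theta> + \<delta>)"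
proof -
  define M where "M = Mb Lm"
  have M0: "M > 0" unfolding M_def by (rule Mb_pos)
  have MB0: "MB \<ge> 0" using MB[of 0] norm_ge_zero order.trans by blast
  have th0: "\<theta> \<ge> 0" using thA[of 0] norm_ge_zero order.trans by blast
  have d0: "\<delta> \<ge> 0" using dl by linarith
  have Lm0: "Lm \<ge> 0" using L by linarith
  have E0: "E2 Lm \<ge> 0" using E2_nonneg[OF Lm0] .
  have Bcs: "continuous_on S B" for S using Bc continuous_on_subset by blast
  have Bcc: "continuous_on S (\<lambda>v. B (v + c))" for S
    by (rule continuous_on_compose2[OF Bc]) (auto intro!: continuous_intros)
  have Pcc: "continuous_on S (\<lambda>v. Xts X (a + c) (v + c))" for S
    by (rule continuous_on_compose2[OF P_cont2[of UNIV]]) (auto intro!: continuous_intros)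
  define U where "U = Xts X (a + L) a"
  define U' where "U' = Xts X (a + c + L') (a + c)"
  define g1 where "g1 v = Xts X a v ** B v" for v
  define g2 where "g2 v = Xts X (a + c) (v + c) ** B (v + c)" for v
  have cg1: "continuous_on S g1" for S unfolding g1_def by (intro continuous_intros P_cont2 Bcs)
  have cg2: "continuous_on S g2" for S unfolding g2_def by (intro continuous_intros Pcc Bcc)
  define J where "J = mat 1 + integral {a..a+L} g1"
  define J' where "J' = mat 1 + integral {a..a+L'} g2"
  have eqH: "Hloc B a L = U ** J" unfolding Hloc_def U_def J_def g1_def by simp
  have "integral {a + c..a + c + L'} (\<lambda>u. Xts X (a + c) u ** B u) = integral {a..a+L'} g2"
    unfolding g2_def using integral_shift_add[where h = "\<lambda>u. Xts X (a + c) u ** B u" and y = a and u = "a + L'" and c = c]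
    by (simp add: ac_simps)
  then have eqH': "Hloc B (a + c) L' = U' ** J'" unfolding Hloc_def U'_def J'_def by (simp add: ac_simps)
  have nU': "norm U' \<le> M" unfolding U'_def M_def by (rule P_bound) (use L in auto)
  have g1b: "norm (g1 v) \<le> M * MB" if "v \<in> {a..a+Lm}" for v
    unfolding g1_def M_def using norm_mm[of "Xts X a v" "B v"] P_bound[of a v Lm] MB[of v] that
    by (smt (verit, best) atLeastAtMost_iff mult_mono norm_ge_zero)
  have g2b: "norm (g2 v) \<le> M * MB" if "v \<in> {a..a+Lm}" for v
    unfolding g2_def M_def using norm_mm[of "Xts X (a + c) (v + c)" "B (v + c)"] P_bound[of "a + c" "v + c" Lm] MB[of "v + c"] that
    by (smt (verit, best) atLeastAtMost_iff mult_mono norm_ge_zero)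
  have nJ: "norm J \<le> sqrt (CARD('q)) + Lm * M * MB"
  proof -
    have "norm (integral {a..a+L} g1) \<le> M * MB * ((a + L) - a)"
      by (rule int_len_bound[OF cg1]) (use g1b L in auto)
    also have "\<dots> \<le> Lm * M * MB" using L M0 MB0 by (simp add: mult_right_mono mult.commute mult.left_commute)
    finally have "norm (integral {a..a+L} g1) \<le> Lm * M * MB" .
    moreover have "norm J \<le> norm (mat 1 :: complex^'q^'q) + norm (integral {a..a+L} g1)"
      unfolding J_def by (rule norm_triangle_ineq)
    ultimately show ?thesis unfolding norm_mat1 by linarith
  qed
  have dU: "norm (U - U') \<le> \<theta> * E2 Lm + MA * M * \<delta>"
  proof -
    have "norm (U - Xts X (a + L + c) (a + c)) \<le> \<theta> * E2 Lm"
      unfolding U_def by (rule P_shift'[OF thA]) (use L in auto)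
    moreover have "norm (Xts X (a + L + c) (a + c) - U') \<le> MA * M * \<bar>(a + L + c) - (a + c + L')\<bar>"
      unfolding U'_def M_def by (rule P_lip1) (use L in auto)
    moreover have "\<bar>(a + L + c) - (a + c + L')\<bar> \<le> \<delta>" using dl by simp
    moreover have "MA * M * \<bar>(a + L + c) - (a + c + L')\<bar> \<le> MA * M * \<delta>"
      using calculation(3) MA0 M0 by (intro mult_left_mono) auto
    ultimately show ?thesis using tri[of U U' "Xts X (a + L + c) (a + c)"] by linarith
  qed
  have dJ: "norm (J - J') \<le> Lm * (\<theta> * E2 Lm * MB + M * \<theta>) + \<delta> * M * MB"
  proof -
    have "J - J' = integral {a..a+L} (\<lambda>v. g1 v - g2 v) + (integral {a..a+L} g2 - integral {a..a+L'} g2)"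
      unfolding J_def J'_def
      by (simp add: Henstock_Kurzweil_Integration.integral_diff integrable_continuous_real cg1 cg2)
    then have "norm (J - J') \<le> norm (integral {a..a+L} (\<lambda>v. g1 v - g2 v)) + norm (integral {a..a+L} g2 - integral {a..a+L'} g2)"
      by (simp add: norm_triangle_ineq)
    also have "norm (integral {a..a+L} (\<lambda>v. g1 v - g2 v)) \<le> (\<theta> * E2 Lm * MB + M * \<theta>) * ((a + L) - a)"
    proof (rule int_len_bound)
      show "continuous_on {a..a + L} (\<lambda>v. g1 v - g2 v)" by (intro continuous_intros cg1 cg2)
      fix v assume v: "v \<in> {a..a+L}"
      have "g1 v - g2 v = (Xts X a v - Xts X (a + c) (v + c)) ** B v + Xts X (a + c) (v + c) ** (B v - B (v + c))"
        unfolding g1_def g2_def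
        by (simp add: bounded_bilinear.diff_left[OF bb_mm] bounded_bilinear.diff_right[OF bb_mm])
      then have "norm (g1 v - g2 v) \<le> norm (Xts X a v - Xts X (a + c) (v + c)) * norm (B v) + norm (Xts X (a + c) (v + c)) * norm (B v - B (v + c))"
        by (metis norm_triangle_le add_mono norm_mm)
      also have "\<dots> \<le> (\<theta> * E2 Lm) * MB + M * \<theta>"
      proof (intro add_mono mult_mono)
        show "norm (Xts X a v - Xts X (a + c) (v + c)) \<le> \<theta> * E2 Lm"
          by (rule P_shift'[OF thA]) (use v L in auto)
        show "norm (Xts X (a + c) (v + c)) \<le> M" unfolding M_def by (rule P_bound) (use v L in auto)
      qed (use MB thB th0 E0 M0 in auto)
      finally show "norm (g1 v - g2 v) \<le> \<theta> * E2 Lm * MB + M * \<theta>" .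
    qed (use L in auto)
    also have "norm (integral {a..a+L} g2 - integral {a..a+L'} g2) \<le> M * MB * \<bar>L - L'\<bar>"
      by (rule int_diff_len[OF cg2 g2b L])
    also have "(\<theta> * E2 Lm * MB + M * \<theta>) * ((a + L) - a) \<le> (\<theta> * E2 Lm * MB + M * \<theta>) * Lm"
      using L th0 E0 M0 MB0 by (intro mult_left_mono) auto
    also have "M * MB * \<bar>L - L'\<bar> \<le> M * MB * \<delta>" using dl M0 MB0 by (intro mult_left_mono) auto
    finally show ?thesis by (simp add: ac_simps)
  qed
  have "norm (Hloc B a L - Hloc B (a + c) L') \<le> norm (U - U') * norm J + norm U' * norm (J - J')"
    unfolding eqH eqH' by (rule norm_prod_diff)
  also have "\<dots> \<le> (\<theta> * E2 Lm + MA * M * \<delta>) * (sqrt (CARD('q)) + Lm * M * MB) + M * (Lm * (\<theta> * E2 Lm * MB + M * \<theta>) + \<delta> * M * MB)"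
    by (intro add_mono mult_mono dU nJ nU' dJ) (use th0 E0 MA0 M0 d0 in auto)
  also have "\<dots> \<le> KH Lm MB * (\<theta> + \<delta>)"
  proof -
    have a1: "\<theta> * E2 Lm + MA * M * \<delta> \<le> (E2 Lm + MA * M) * (\<theta> + \<delta>)"
      using th0 d0 E0 MA0 M0 by (simp add: algebra_simps)
    have a2: "Lm * (\<theta> * E2 Lm * MB + M * \<theta>) + \<delta> * M * MB \<le> (Lm * (E2 Lm * MB + M) + M * MB) * (\<theta> + \<delta>)"
      using th0 d0 E0 MA0 M0 MB0 Lm0 by (simp add: algebra_simps)
    have "(\<theta> * E2 Lm + MA * M * \<delta>) * (sqrt (CARD('q)) + Lm * M * MB) \<le> ((E2 Lm + MA * M) * (\<theta> + \<delta>)) * (sqrt (CARD('q)) + Lm * M * MB)"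
      using a1 M0 MB0 Lm0 by (intro mult_right_mono) auto
    moreover have "M * (Lm * (\<theta> * E2 Lm * MB + M * \<theta>) + \<delta> * M * MB) \<le> M * ((Lm * (E2 Lm * MB + M) + M * MB) * (\<theta> + \<delta>))"
      using a2 M0 by (intro mult_left_mono) auto
    ultimately show ?thesis unfolding KH_def M_def[symmetric] by (simp add: algebra_simps)
  qed
  finally show ?thesis .
qed


lemma h_dep:
  fixes f :: "real \<Rightarrow> complex^'q"
  assumes fc: "continuous_on UNIV f" and Mf: "\<And>u. norm (f u) \<le> Mf"
    and L: "0 \<le> L" "L \<le> Lm" "0 \<le> L'" "L' \<le> Lm"
    and thA: "\<And>u. norm (A u - A (u + c)) \<le> \<theta>" and thf: "\<And>u. norm (f u - f (u + c)) \<le> \<theta>"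
    and dl: "\<bar>L - L'\<bar> \<le> \<delta>"
  shows "norm (hloc f a L - hloc f (a + c) L') \<le> Kh Lm Mf * (\<theta> + \<delta>)"
proof -
  define M where "M = Mb Lm"
  have M0: "M > 0" unfolding M_def by (rule Mb_pos)
  have Mf0: "Mf \<ge> 0" using Mf[of 0] norm_ge_zero order.trans by blast
  have th0: "\<theta> \<ge> 0" using thA[of 0] norm_ge_zero order.trans by blast
  have d0: "\<delta> \<ge> 0" using dl by linarith
  have Lm0: "Lm \<ge> 0" using L by linarith
  have E0: "E2 Lm \<ge> 0" using E2_nonneg[OF Lm0] .
  have fcs: "continuous_on S f" for S using fc continuous_on_subset by blast
  have fcc: "continuous_on S (\<lambda>v. f (v + c))" for S
    by (rule continuous_on_compose2[OF fc]) (auto intro!: continuous_intros)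
  have Pcc: "continuous_on S (\<lambda>v. Xts X (a + c + L') (v + c))" for S
    by (rule continuous_on_compose2[OF P_cont2[of UNIV]]) (auto intro!: continuous_intros)
  define k1 where "k1 v = Xts X (a + L) v *v f v" for v
  define k2 where "k2 v = Xts X (a + c + L') (v + c) *v f (v + c)" for v
  have ck1: "continuous_on S k1" for S unfolding k1_def by (intro continuous_intros P_cont2 fcs)
  have ck2: "continuous_on S k2" for S unfolding k2_def by (intro continuous_intros Pcc fcc)
  have eqh: "hloc f a L = integral {a..a+L} k1" unfolding hloc_def k1_def by simp
  have eqh': "hloc f (a + c) L' = integral {a..a+L'} k2"
    unfolding hloc_def k2_def
    using integral_shift_add[where h = "\<lambda>u. Xts X (a + c + L') u *v f u" and y = a and u = "a + L'" and c = c]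
    by (simp add: ac_simps)
  have k2b: "norm (k2 v) \<le> M * Mf" if "v \<in> {a..a+Lm}" for v
    unfolding k2_def M_def using norm_mv[of "Xts X (a + c + L') (v + c)" "f (v + c)"] P_bound[of "a + c + L'" "v + c" Lm] Mf[of "v + c"] that L
    by (smt (verit, best) atLeastAtMost_iff mult_mono norm_ge_zero)
  have "hloc f a L - hloc f (a + c) L' = integral {a..a+L} (\<lambda>v. k1 v - k2 v) + (integral {a..a+L} k2 - integral {a..a+L'} k2)"
    unfolding eqh eqh'
    by (simp add: Henstock_Kurzweil_Integration.integral_diff integrable_continuous_real ck1 ck2)
  then have "norm (hloc f a L - hloc f (a + c) L') \<le> norm (integral {a..a+L} (\<lambda>v. k1 v - k2 v)) + norm (integral {a..a+L} k2 - integral {a..a+L'} k2)"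
    by (simp add: norm_triangle_ineq)
  also have "norm (integral {a..a+L} (\<lambda>v. k1 v - k2 v)) \<le> ((\<theta> * E2 Lm + MA * M * \<delta>) * Mf + M * \<theta>) * ((a + L) - a)"
  proof (rule int_len_bound)
    show "continuous_on {a..a + L} (\<lambda>v. k1 v - k2 v)" by (intro continuous_intros ck1 ck2)
    fix v assume v: "v \<in> {a..a+L}"
    have "norm (k1 v - k2 v) \<le> norm (Xts X (a + L) v - Xts X (a + c + L') (v + c)) * norm (f v) + norm (Xts X (a + c + L') (v + c)) * norm (f v - f (v + c))"
      unfolding k1_def k2_def by (rule norm_prod_diff_v)
    also have "\<dots> \<le> (\<theta> * E2 Lm + MA * M * \<delta>) * Mf + M * \<theta>"
    proof (intro add_mono mult_mono)
      have "norm (Xts X (a + L) v - Xts X (a + L + c) (v + c)) \<le> \<theta> * E2 Lm"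
        by (rule P_shift'[OF thA]) (use v L in auto)
      moreover have "norm (Xts X (a + L + c) (v + c) - Xts X (a + c + L') (v + c)) \<le> MA * M * \<bar>(a + L + c) - (a + c + L')\<bar>"
        unfolding M_def by (rule P_lip1) (use v L in auto)
      moreover have "MA * M * \<bar>(a + L + c) - (a + c + L')\<bar> \<le> MA * M * \<delta>"
        using dl MA0 M0 by (intro mult_left_mono) auto
      ultimately show "norm (Xts X (a + L) v - Xts X (a + c + L') (v + c)) \<le> \<theta> * E2 Lm + MA * M * \<delta>"
        using tri[of "Xts X (a + L) v" "Xts X (a + c + L') (v + c)" "Xts X (a + L + c) (v + c)"] by linarith
      show "norm (Xts X (a + c + L') (v + c)) \<le> M" unfolding M_def by (rule P_bound) (use v L in auto)
    qed (use Mf thf th0 E0 M0 MA0 d0 in auto)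
    finally show "norm (k1 v - k2 v) \<le> (\<theta> * E2 Lm + MA * M * \<delta>) * Mf + M * \<theta>" .
  qed (use L in auto)
  also have "norm (integral {a..a+L} k2 - integral {a..a+L'} k2) \<le> M * Mf * \<bar>L - L'\<bar>"
    by (rule int_diff_len[OF ck2 k2b L])
  also have "((\<theta> * E2 Lm + MA * M * \<delta>) * Mf + M * \<theta>) * ((a + L) - a) \<le> ((\<theta> * E2 Lm + MA * M * \<delta>) * Mf + M * \<theta>) * Lm"
    using L th0 E0 M0 Mf0 MA0 d0 by (intro mult_left_mono) auto
  also have "M * Mf * \<bar>L - L'\<bar> \<le> M * Mf * \<delta>" using dl M0 Mf0 by (intro mult_left_mono) auto
  also have "((\<theta> * E2 Lm + MA * M * \<delta>) * Mf + M * \<theta>) * Lm + M * Mf * \<delta> \<le> Kh Lm Mf * (\<theta> + \<delta>)"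
  proof -
    have "\<theta> * E2 Lm + MA * M * \<delta> \<le> (E2 Lm + MA * M) * (\<theta> + \<delta>)"
      using th0 d0 E0 MA0 M0 by (simp add: algebra_simps)
    then have "(\<theta> * E2 Lm + MA * M * \<delta>) * Mf \<le> ((E2 Lm + MA * M) * (\<theta> + \<delta>)) * Mf"
      using Mf0 by (intro mult_right_mono) auto
    moreover have "M * \<theta> \<le> M * (\<theta> + \<delta>)" using M0 d0 by (intro mult_left_mono) auto
    ultimately have "(\<theta> * E2 Lm + MA * M * \<delta>) * Mf + M * \<theta> \<le> ((E2 Lm + MA * M) * (\<theta> + \<delta>)) * Mf + M * (\<theta> + \<delta>)"
      by linarith
    then have "((\<theta> * E2 Lm + MA * M * \<delta>) * Mf + M * \<theta>) * Lm \<le> (((E2 Lm + MA * M) * (\<theta> + \<delta>)) * Mf + M * (\<theta> + \<delta>)) * Lm"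
      using Lm0 by (rule mult_right_mono)
    moreover have "M * Mf * \<delta> \<le> M * Mf * (\<theta> + \<delta>)" using th0 M0 Mf0 by (intro mult_left_mono) auto
    ultimately show ?thesis unfolding Kh_def M_def[symmetric] by (simp add: algebra_simps)
  qed
  finally show ?thesis by simp
qed

end



lemma geo_int:
  fixes \<rho> :: real
  assumes r: "0 < \<rho>" "\<rho> < 1"
  shows "((\<lambda>k::int. \<rho> ^ nat \<bar>k\<bar>) has_sum ((1 + \<rho>) / (1 - \<rho>))) UNIV"
proof -
  have g: "(\<lambda>m. \<rho> ^ m) sums (1 / (1 - \<rho>))" by (rule geometric_sums) (use r in simp)
  have h0: "((\<lambda>m. \<rho> ^ m) has_sum (1 / (1 - \<rho>))) UNIV"
    by (rule sums_nonneg_imp_has_sum[OF g]) (use r in simp)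
  have g1: "(\<lambda>m. \<rho> * \<rho> ^ m) sums (\<rho> * (1 / (1 - \<rho>)))" by (rule sums_mult[OF g])
  have h1: "((\<lambda>m. \<rho> * \<rho> ^ m) has_sum (\<rho> * (1 / (1 - \<rho>)))) UNIV"
    by (rule sums_nonneg_imp_has_sum[OF g1]) (use r in simp)
  have i0: "inj (int :: nat \<Rightarrow> int)" by (simp add: inj_on_def)
  have i1: "inj (\<lambda>m::nat. - int m - 1)" by (simp add: inj_on_def)
  have A: "((\<lambda>k::int. \<rho> ^ nat \<bar>k\<bar>) has_sum (1 / (1 - \<rho>))) (range int)"
    unfolding has_sum_reindex[OF i0] o_def using h0 by simp
  have B: "((\<lambda>k::int. \<rho> ^ nat \<bar>k\<bar>) has_sum (\<rho> * (1 / (1 - \<rho>)))) (range (\<lambda>m::nat. - int m - 1))"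
    unfolding has_sum_reindex[OF i1] o_def
  proof -
    have "\<rho> ^ nat \<bar>- int m - 1\<bar> = \<rho> * \<rho> ^ m" for m
    proof -
      have "nat \<bar>- int m - 1\<bar> = Suc m" by simp
      then show ?thesis by simp
    qed
    then show "((\<lambda>x. \<rho> ^ nat \<bar>- int x - 1\<bar>) has_sum \<rho> * (1 / (1 - \<rho>))) UNIV" using h1 by simp
  qed
  have U: "range int \<union> range (\<lambda>m::nat. - int m - 1) = (UNIV :: int set)"
  proof -
    have "k \<in> range int \<union> range (\<lambda>m::nat. - int m - 1)" for k :: int
    proof (cases "k \<ge> 0")
      case True then show ?thesis by (metis UnI1 nonneg_int_cases rangeI)
    next
      case False then have "k = - int (nat (- k - 1)) - 1" by simp
      then show ?thesis by (metis UnI2 rangeI)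
    qed
    then show ?thesis by blast
  qed
  have Dj: "range int \<inter> range (\<lambda>m::nat. - int m - 1) = {}" by auto
  from has_sum_Un_disjoint[OF A B Dj] have "((\<lambda>k::int. \<rho> ^ nat \<bar>k\<bar>) has_sum (1 / (1 - \<rho>) + \<rho> * (1 / (1 - \<rho>)))) UNIV"
    unfolding U .
  moreover have "1 / (1 - \<rho>) + \<rho> * (1 / (1 - \<rho>)) = (1 + \<rho>) / (1 - \<rho>)" by (simp add: add_divide_distrib)
  ultimately show ?thesis by simp
qed

lemma geo_int_shift:
  fixes \<rho> :: real
  assumes r: "0 < \<rho>" "\<rho> < 1"
  shows "((\<lambda>k::int. \<rho> ^ nat \<bar>n - k\<bar>) has_sum ((1 + \<rho>) / (1 - \<rho>))) UNIV"
proof -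
  have i: "inj (\<lambda>k::int. n - k)" by (simp add: inj_on_def)
  have s: "range (\<lambda>k::int. n - k) = UNIV" by (rule surjI[of _ "\<lambda>k. n - k"]) simp
  have "((\<lambda>k::int. \<rho> ^ nat \<bar>k\<bar>) has_sum ((1 + \<rho>) / (1 - \<rho>))) (range (\<lambda>k::int. n - k))"
    unfolding s by (rule geo_int[OF r])
  then show ?thesis unfolding has_sum_reindex[OF i] o_def .
qed

lemma has_sum_delta:
  fixes v :: "'a::{comm_monoid_add,topological_space}"
  shows "((\<lambda>k. if k = n then v else 0) has_sum v) UNIV"
proof -
  have "((\<lambda>k. if k = n then v else 0) has_sum v) {n}" using has_sum_finite[of "{n}" "\<lambda>k. if k = n then v else 0"] by simp
  then show ?thesis by (subst (asm) has_sum_cong_neutral[where T = UNIV]) auto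
qed

locale dich =
  fixes Hs :: "int \<Rightarrow> complex^'q^'q" and Phi :: "int \<Rightarrow> complex^'q^'q" and P :: "complex^'q^'q"
    and K \<rho> :: real
  assumes Phi_fund: "\<And>n. Phi (n + 1) = Hs n ** Phi n"
    and Phi_inv: "\<And>n. invertible (Phi n)"
    and K_pos: "K > 0" and rho: "0 < \<rho>" "\<rho> < 1"
    and G_bound: "\<And>n k. norm (Gmat Phi P n k) \<le> K * \<rho> ^ nat \<bar>n - k\<bar>"
begin

definition Cb where "Cb = K * ((1 + \<rho>) / (1 - \<rho>))"

lemma Cb_le: "Cb \<le> 2 * K / (1 - \<rho>)"
proof -
  have "(1 + \<rho>) / (1 - \<rho>) \<le> 2 / (1 - \<rho>)" using rho by (intro divide_right_mono) auto
  then show ?thesis unfolding Cb_def using K_pos by (simp add: mult_left_mono divide_simps)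
qed

lemma Cb_pos: "Cb > 0" unfolding Cb_def using K_pos rho by simp

lemma green_summable:
  assumes gb: "\<And>k. norm (g k) \<le> Mg"
  shows "((\<lambda>k. Gmat Phi P n k *v g k) has_sum (\<Sum>\<^sub>\<infinity>k. Gmat Phi P n k *v g k)) UNIV"
    and "norm (\<Sum>\<^sub>\<infinity>k. Gmat Phi P n k *v g k) \<le> Cb * Mg"
proof -
  have W: "((\<lambda>k. (K * Mg) * \<rho> ^ nat \<bar>n - k\<bar>) has_sum ((K * Mg) * ((1 + \<rho>) / (1 - \<rho>)))) UNIV"
    by (rule has_sum_cmult_right[OF geo_int_shift[OF rho]])
  have nb: "norm (Gmat Phi P n k *v g k) \<le> (K * Mg) * \<rho> ^ nat \<bar>n - k\<bar>" for k
  proof -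
    have "norm (Gmat Phi P n k *v g k) \<le> norm (Gmat Phi P n k) * norm (g k)" by (rule norm_mv)
    also have "\<dots> \<le> (K * \<rho> ^ nat \<bar>n - k\<bar>) * Mg" by (intro mult_mono G_bound gb) (use K_pos rho in auto)
    finally show ?thesis by (simp add: ac_simps)
  qed
  have "(\<lambda>k. norm (Gmat Phi P n k *v g k)) summable_on UNIV"
    by (rule Infinite_Sum.abs_summable_on_comparison_test'[of "\<lambda>k. (K * Mg) * \<rho> ^ nat \<bar>n - k\<bar>"]) (use W nb summable_on_def in auto)
  then have "(\<lambda>k. Gmat Phi P n k *v g k) summable_on UNIV" by (rule abs_summable_summable)
  then show hs: "((\<lambda>k. Gmat Phi P n k *v g k) has_sum (\<Sum>\<^sub>\<infinity>k. Gmat Phi P n k *v g k)) UNIV"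
    by (simp add: summable_iff_has_sum_infsum[symmetric])
  have "norm (\<Sum>\<^sub>\<infinity>k. Gmat Phi P n k *v g k) \<le> (K * Mg) * ((1 + \<rho>) / (1 - \<rho>))"
    by (rule norm_infsum_le[OF hs W nb])
  then show "norm (\<Sum>\<^sub>\<infinity>k. Gmat Phi P n k *v g k) \<le> Cb * Mg" unfolding Cb_def by (simp add: ac_simps)
qed

lemma minvP: "Phi n ** matrix_inv (Phi n) = mat 1" "matrix_inv (Phi n) ** Phi n = mat 1"
  using minv[OF Phi_inv] by auto

lemma G_step: "Gmat Phi P (n + 1) k = Hs n ** Gmat Phi P n k + (if k = n then mat 1 else 0)"
proof -
  consider "k < n" | "k = n" | "k > n" by linarith
  then show ?thesis
  proof cases
    case 1 then show ?thesis unfolding Gmat_def Phi_fund by (simp add: matrix_mul_assoc)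
  next
    case 3 then show ?thesis unfolding Gmat_def Phi_fund
      by (simp add: matrix_mul_assoc bounded_bilinear.minus_right[OF bb_mm])
  next
    case 2
    have "Gmat Phi P (n + 1) n = Phi (n+1) ** P ** matrix_inv (Phi (n + 1))" unfolding Gmat_def by simp
    moreover have "Hs n ** Gmat Phi P n n = - (Phi (n+1) ** (mat 1 - P) ** matrix_inv (Phi (n + 1)))"
      unfolding Gmat_def Phi_fund by (simp add: matrix_mul_assoc bounded_bilinear.minus_right[OF bb_mm])
    moreover have "Phi (n+1) ** P ** matrix_inv (Phi (n + 1)) + Phi (n+1) ** (mat 1 - P) ** matrix_inv (Phi (n + 1)) = mat 1"
    proof -
      have e: "Phi (n+1) ** P ** matrix_inv (Phi (n + 1)) + Phi (n+1) ** (mat 1 - P) ** matrix_inv (Phi (n + 1))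
          = Phi (n+1) ** (P + (mat 1 - P)) ** matrix_inv (Phi (n + 1))"
        by (simp only: bounded_bilinear.add_left[OF bb_mm] bounded_bilinear.add_right[OF bb_mm])
      have "P + (mat 1 - P) = mat 1" by simp
      then show ?thesis using e minvP by simp
    qed
    ultimately show ?thesis using 2 by (simp add: eq_diff_eq[symmetric])
  qed
qed

lemma green_solves:
  assumes gb: "\<And>k. norm (g k) \<le> Mg"
  shows "(\<Sum>\<^sub>\<infinity>k. Gmat Phi P (n + 1) k *v g k) = Hs n *v (\<Sum>\<^sub>\<infinity>k. Gmat Phi P n k *v g k) + g n"
proof -
  have bl: "bounded_linear (\<lambda>v. Hs n *v v)" by (rule bounded_bilinear.bounded_linear_right[OF bb_mv])
  have h1: "((\<lambda>k. Hs n *v (Gmat Phi P n k *v g k)) has_sum (Hs n *v (\<Sum>\<^sub>\<infinity>k. Gmat Phi P n k *v g k))) UNIV"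
    by (rule has_sum_bounded_linear[OF bl green_summable(1)[OF gb]])
  have h2: "((\<lambda>k. if k = n then g n else 0) has_sum g n) UNIV" by (rule has_sum_delta)
  have "((\<lambda>k. Hs n *v (Gmat Phi P n k *v g k) + (if k = n then g n else 0)) has_sum (Hs n *v (\<Sum>\<^sub>\<infinity>k. Gmat Phi P n k *v g k) + g n)) UNIV"
    by (rule has_sum_add[OF h1 h2])
  moreover have "Hs n *v (Gmat Phi P n k *v g k) + (if k = n then g n else 0) = Gmat Phi P (n + 1) k *v g k" for k
    unfolding G_step by (simp add: matrix_vector_mul_assoc bounded_bilinear.add_left[OF bb_mv])
  ultimately have "((\<lambda>k. Gmat Phi P (n + 1) k *v g k) has_sum (Hs n *v (\<Sum>\<^sub>\<infinity>k. Gmat Phi P n k *v g k) + g n)) UNIV"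
    by simp
  then show ?thesis by (simp add: infsumI)
qed


lemma Hs_eq: "Hs n = Phi (n + 1) ** matrix_inv (Phi n)"
  using minvP[of n] by (simp add: Phi_fund matrix_mul_assoc[symmetric])

lemma Phi_cancel: "Phi n *v v = 0 \<Longrightarrow> v = 0"
  by (metis matrix_vector_mul_assoc matrix_vector_mul_lid matrix_vector_mult_0_right minvP(2))

lemma Hs_cancel: "Hs n *v v = 0 \<Longrightarrow> v = 0"
proof -
  assume "Hs n *v v = 0"
  then have "Phi (n + 1) *v (matrix_inv (Phi n) *v v) = 0" by (simp add: Hs_eq matrix_vector_mul_assoc)
  then have "matrix_inv (Phi n) *v v = 0" by (rule Phi_cancel)
  then have "Phi n *v (matrix_inv (Phi n) *v v) = 0" by simp
  then show "v = 0" by (simp add: matrix_vector_mul_assoc minvP)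
qed

lemma hom_rep:
  assumes hom: "\<And>n. x (n + 1) = Hs n *v x n"
  shows "x n = Phi n *v (matrix_inv (Phi 0) *v x 0)"
proof (induction n rule: int_induct[where k = 0])
  case base then show ?case by (simp add: matrix_vector_mul_assoc minvP)
next
  case (step1 i) then show ?case by (simp add: hom Phi_fund matrix_vector_mul_assoc matrix_mul_assoc)
next
  case (step2 i)
  have "Hs (i - 1) *v (x (i - 1) - Phi (i - 1) *v (matrix_inv (Phi 0) *v x 0)) = 0"
    using hom[of "i - 1"] step2(2) Phi_fund[of "i - 1"]
    by (simp add: matrix_vector_mult_diff_distrib matrix_vector_mul_assoc matrix_mul_assoc)
  then show ?case using Hs_cancel by fastforce
qed

lemma small_zero:
  fixes v :: "'a::real_normed_vector"
  assumes "\<And>m::nat. norm v \<le> C * \<rho> ^ m"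
  shows "v = 0"
proof -
  have "(\<lambda>m. C * \<rho> ^ m) \<longlonglongrightarrow> C * 0" using rho by (intro tendsto_intros) auto
  then have "norm v \<le> 0" using assms by (intro tendsto_le[OF _ _ tendsto_const]) (auto simp: eventually_sequentially)
  then show ?thesis by simp
qed

lemma hom_zero:
  assumes hom: "\<And>n. x (n + 1) = Hs n *v x n" and xb: "\<And>n. norm (x n) \<le> Mx"
  shows "x n = 0"
proof -
  define u where "u = matrix_inv (Phi 0) *v x 0"
  have rep: "x n = Phi n *v u" for n unfolding u_def by (rule hom_rep[OF hom])
  have Mx0: "Mx \<ge> 0" using xb[of 0] norm_ge_zero order.trans by blast
  have a: "Phi 0 *v ((mat 1 - P) *v u) = 0"
  proof (rule small_zero[where C = "K * Mx"])
    fix m :: nat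
    have "Gmat Phi P 0 (int m) *v x (int m + 1) = - (Phi 0 *v ((mat 1 - P) *v u))"
      unfolding Gmat_def rep[of "int m + 1"]
      by (simp add: matrix_vector_mul_assoc[symmetric] bounded_bilinear.minus_left[OF bb_mv]) (simp add: matrix_vector_mul_assoc minvP)
    then have "norm (Phi 0 *v ((mat 1 - P) *v u)) = norm (Gmat Phi P 0 (int m) *v x (int m + 1))" by simp
    also have "\<dots> \<le> norm (Gmat Phi P 0 (int m)) * norm (x (int m + 1))" by (rule norm_mv)
    also have "\<dots> \<le> (K * \<rho> ^ m) * Mx" using G_bound[of 0 "int m"] xb[of "int m + 1"] K_pos rho
      by (intro mult_mono) auto
    finally show "norm (Phi 0 *v ((mat 1 - P) *v u)) \<le> K * Mx * \<rho> ^ m" by (simp add: ac_simps)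
  qed
  have b: "Phi 0 *v (P *v u) = 0"
  proof (rule small_zero[where C = "K * Mx"])
    fix m :: nat
    have "Gmat Phi P 0 (- int m - 1) *v x (- int m) = Phi 0 *v (P *v u)"
      unfolding Gmat_def rep[of "- int m"]
      by (simp add: matrix_vector_mul_assoc[symmetric]) (simp add: matrix_vector_mul_assoc minvP)
    then have "norm (Phi 0 *v (P *v u)) = norm (Gmat Phi P 0 (- int m - 1) *v x (- int m))" by simp
    also have "\<dots> \<le> norm (Gmat Phi P 0 (- int m - 1)) * norm (x (- int m))" by (rule norm_mv)
    also have "\<dots> \<le> (K * \<rho> ^ Suc m) * Mx" using G_bound[of 0 "- int m - 1"] xb[of "- int m"] K_pos rho
      by (intro mult_mono) (auto simp: nat_add_distrib)
    also have "\<dots> \<le> (K * \<rho> ^ m) * Mx" using K_pos rho Mx0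
      by (intro mult_right_mono mult_left_mono) (auto simp: power_Suc2 mult_left_le)
    finally show "norm (Phi 0 *v (P *v u)) \<le> K * Mx * \<rho> ^ m" by (simp add: ac_simps)
  qed
  have "(mat 1 - P) *v u = 0" using a Phi_cancel by blast
  moreover have "P *v u = 0" using b Phi_cancel by blast
  ultimately have "u = 0" by (simp add: matrix_vector_mult_diff_rdistrib)
  then show ?thesis using rep by simp
qed

lemma bounded_sol:
  assumes eq: "\<And>n. x (n + 1) = Hs n *v x n + g n" and xb: "\<And>n. norm (x n) \<le> Mx"
    and gb: "\<And>k. norm (g k) \<le> Mg"
  shows "x n = (\<Sum>\<^sub>\<infinity>k. Gmat Phi P n k *v g k)" and "norm (x n) \<le> Cb * Mg"
proof -
  define y where "y n = (\<Sum>\<^sub>\<infinity>k. Gmat Phi P n k *v g k)" for n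
  have yb: "norm (y n) \<le> Cb * Mg" for n unfolding y_def by (rule green_summable(2)[OF gb])
  have ys: "y (n + 1) = Hs n *v y n + g n" for n unfolding y_def by (rule green_solves[OF gb])
  have "(\<lambda>n. x n - y n) n = 0"
  proof (rule hom_zero)
    fix n show "x (n + 1) - y (n + 1) = Hs n *v (x n - y n)"
      using eq[of n] ys[of n] by (simp add: matrix_vector_mult_diff_distrib)
    show "norm (x n - y n) \<le> Mx + Cb * Mg" using xb[of n] yb[of n] norm_triangle_ineq4[of "x n" "y n"] by linarith
  qed
  then show "x n = (\<Sum>\<^sub>\<infinity>k. Gmat Phi P n k *v g k)" unfolding y_def by simp
  then show "norm (x n) \<le> Cb * Mg" using yb unfolding y_def by simp
qed

end


context fundX
begin

lemma hloc_bound: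
  fixes f :: "real \<Rightarrow> complex^'q"
  assumes fc: "continuous_on UNIV f" and Mf: "\<And>u. norm (f u) \<le> Mf" and L: "0 \<le> L" "L \<le> Lm"
  shows "norm (hloc f a L) \<le> Mb Lm * Mf * L"
proof -
  have fcs: "continuous_on S f" for S using fc continuous_on_subset by blast
  have "norm (hloc f a L) \<le> Mb Lm * Mf * ((a + L) - a)"
    unfolding hloc_def
  proof (rule int_len_bound)
    show "continuous_on {a..a + L} (\<lambda>u. Xts X (a + L) u *v f u)" by (intro continuous_intros P_cont2 fcs)
    fix v assume v: "v \<in> {a..a+L}"
    have "norm (Xts X (a + L) v *v f v) \<le> norm (Xts X (a + L) v) * norm (f v)" by (rule norm_mv)
    also have "\<dots> \<le> Mb Lm * Mf" using v L P_bound[of "a + L" v Lm] Mf[of v] Mb_pos[of Lm] by (intro mult_mono) auto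
    finally show "norm (Xts X (a + L) v *v f v) \<le> Mb Lm * Mf" .
  qed (use L in auto)
  then show ?thesis by simp
qed

end



lemma tri2:
  fixes a b y :: "'a::real_normed_vector"
  assumes "norm (a - y) \<le> e" "norm (b - y) \<le> e"
  shows "norm (a - b) \<le> e + e"
  using tri[of a b y] assms norm_minus_commute[of b y] by linarith

lemma rel_dense_int_mono:
  assumes "rel_dense_int S" "S \<subseteq> T" shows "rel_dense_int T"
  using assms unfolding rel_dense_int_def by (meson subsetD)

theorem theorem1:
  fixes A B :: "real \<Rightarrow> complex^'q^'q"
    and f :: "real \<Rightarrow> complex^'q"
    and X :: "real \<Rightarrow> complex^'q^'q"
    and tt :: "int \<Rightarrow> real"
    and Phi :: "int \<Rightarrow> complex^'q^'q"
    and P :: "complex^'q^'q"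
    and K \<rho> :: real
  assumes tt_mono: "\<And>n. tt n < tt (n + 1)"
    and tt_top: "filterlim tt at_top at_top"
    and tt_bot: "filterlim tt at_bot at_bot"
    and A_li: "\<And>a b. A absolutely_integrable_on {a..b}"
    and B_li: "\<And>a b. B absolutely_integrable_on {a..b}"
    and f_li: "\<And>a b. f absolutely_integrable_on {a..b}"
    and X_fund: "fundamental_matrix A X"
    and J_inv: "\<And>n s. s \<in> {tt n..tt (n + 1)} \<Longrightarrow> invertible (Jmat X B tt n s)"
    and H1: "almost_periodic_real A" "almost_periodic_real B"
    and H3: "H3 tt f"
    and Phi_fund: "\<And>n. Phi (n + 1) = Hmat X B tt n ** Phi n"
    and Phi_inv: "\<And>n. invertible (Phi n)"
    and P_proj: "P ** P = P"
    and K_pos: "K > 0" and rho: "0 < \<rho>" "\<rho> < 1"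
    and G_bound: "\<And>n k. norm (Gmat Phi P n k) \<le> K * \<rho> ^ nat \<bar>n - k\<bar>"
  defines "c \<equiv> (\<lambda>n. \<Sum>\<^sub>\<infinity>k. Gmat Phi P n k *v hvec X f tt k)"
  shows "almost_periodic_int c
     \<and> (\<forall>n. c (n + 1) = Hmat X B tt n *v c n + hvec X f tt n)
     \<and> (\<forall>c'. almost_periodic_int c' \<and> (\<forall>n. c' (n + 1) = Hmat X B tt n *v c' n + hvec X f tt n)
             \<longrightarrow> c' = c)
     \<and> bdd_above (range (\<lambda>k. norm (hvec X f tt k)))
     \<and> (\<forall>n. norm (c n) \<le> 2 * K / (1 - \<rho>) * (SUP k. norm (hvec X f tt k)))"
proof -
  have H2: "H2 tt" using H3 unfolding H3_def by simp
  interpret tts: ttseq tt using tt_mono tt_top tt_bot H2 by unfold_locales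
  interpret fx: fundX A X using X_fund H1(1) by unfold_locales
  interpret dc: dich "Hmat X B tt" Phi P K \<rho> using Phi_fund Phi_inv K_pos rho G_bound by unfold_locales
  have fap: "almost_periodic_real f" by (rule tts.f_ap[OF H3])
  obtain MB where MB: "\<And>u. norm (B u) \<le> MB" using ap_bounded[OF H1(2)] by blast
  obtain Mf where Mf: "\<And>u. norm (f u) \<le> Mf" using ap_bounded[OF fap] by blast
  have Mf0: "Mf \<ge> 0" using Mf[of 0] norm_ge_zero order.trans by blast
  have MB0: "MB \<ge> 0" using MB[of 0] norm_ge_zero order.trans by blast
  have Bc: "continuous_on UNIV B" by (rule ap_cont[OF H1(2)])
  have fc: "continuous_on UNIV f" by (rule ap_cont[OF fap])
  obtain k0 :: nat and Lmax where "k0 \<ge> 1" "\<And>n. tt (n + int k0) \<ge> tt n + 1" and Lmax: "\<And>n. tt (n + 1) - tt n \<le> Lmax"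
    using tts.tt_bounds by metis
  have Lpos: "0 \<le> tt (n + 1) - tt n" for n using tt_mono[of n] by simp
  have Lmax0: "0 \<le> Lmax" using Lpos[of 0] Lmax[of 0] by linarith
  define Mh where "Mh = fx.Mb Lmax * Mf * Lmax"
  have hb: "norm (hvec X f tt k) \<le> Mh" for k
  proof -
    have "norm (hvec X f tt k) \<le> fx.Mb Lmax * Mf * (tt (k + 1) - tt k)"
      unfolding fx.hvec_loc by (rule fx.hloc_bound[OF fc Mf Lpos Lmax])
    also have "\<dots> \<le> fx.Mb Lmax * Mf * Lmax" using fx.Mb_pos[of Lmax] Mf0 Lmax[of k] by (intro mult_left_mono) auto
    finally show ?thesis unfolding Mh_def .
  qed
  have c_sol: "c (n + 1) = Hmat X B tt n *v c n + hvec X f tt n" for n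
    unfolding c_def by (rule dc.green_solves[OF hb])
  have c_bd: "norm (c n) \<le> dc.Cb * Mh" for n
    unfolding c_def by (rule dc.green_summable(2)[OF hb])
  \<comment> \<open>total boundedness of the orbit of (H, h)\<close>
  have tb: "\<exists>F. finite F \<and> (\<forall>m. \<exists>j\<in>F. \<forall>n. norm (Hmat X B tt (n+m) - Hmat X B tt (n+j)) \<le> \<eta>
              \<and> norm (hvec X f tt (n+m) - hvec X f tt (n+j)) \<le> \<eta>)" if \<eta>: "\<eta> > 0" for \<eta>
  proof -
    define KK where "KK = \<bar>fx.KH Lmax MB\<bar> + \<bar>fx.Kh Lmax Mf\<bar> + 1"
    have KK: "KK > 0" "fx.KH Lmax MB \<le> KK" "fx.Kh Lmax Mf \<le> KK" unfolding KK_def by auto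
    define e0 where "e0 = \<eta> / (4 * KK)"
    have e0: "e0 > 0" unfolding e0_def using \<eta> KK by simp
    obtain dA where dA: "dA > 0" "\<And>x y. \<bar>x - y\<bar> \<le> dA \<Longrightarrow> norm (A x - A y) \<le> e0"
      using ap_unif[OF H1(1) e0] by blast
    obtain dB where dB: "dB > 0" "\<And>x y. \<bar>x - y\<bar> \<le> dB \<Longrightarrow> norm (B x - B y) \<le> e0"
      using ap_unif[OF H1(2) e0] by blast
    obtain df where df: "df > 0" "\<And>x y. \<bar>x - y\<bar> \<le> df \<Longrightarrow> norm (f x - f y) \<le> e0"
      using ap_unif[OF fap e0] by blast
    define d1 where "d1 = min e0 (min dA (min dB df))"
    have d1: "d1 > 0" "d1 \<le> e0" "d1 \<le> dA" "d1 \<le> dB" "d1 \<le> df" unfolding d1_def using e0 dA dB df by auto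
    obtain F1 where F1: "finite F1" "\<And>m. \<exists>j\<in>F1. \<forall>n. \<bar>tt (n + m) - tt m - (tt (n + j) - tt j)\<bar> \<le> d1/2"
      using tts.sigma_tb[of "d1/2"] d1 by auto
    obtain FA where FA: "finite FA" "\<And>r. \<exists>j\<in>FA. \<forall>s. norm (A (s + r) - A (s + j)) \<le> e0/2"
      using ap_tb[OF H1(1), of "e0/2"] e0 by auto
    obtain FB where FB: "finite FB" "\<And>r. \<exists>j\<in>FB. \<forall>s. norm (B (s + r) - B (s + j)) \<le> e0/2"
      using ap_tb[OF H1(2), of "e0/2"] e0 by auto
    obtain Ff where Ff: "finite Ff" "\<And>r. \<exists>j\<in>Ff. \<forall>s. norm (f (s + r) - f (s + j)) \<le> e0/2"
      using ap_tb[OF fap, of "e0/2"] e0 by auto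
    define R1 where "R1 m y \<longleftrightarrow> (\<forall>n. \<bar>tt (n + m) - tt m - (tt (n + y) - tt y)\<bar> \<le> d1/2)" for m y
    define R2 where "R2 m y \<longleftrightarrow> (\<forall>s. norm (A (s + tt m) - A (s + fst y)) \<le> e0/2)
        \<and> (\<forall>s. norm (B (s + tt m) - B (s + fst (snd y))) \<le> e0/2)
        \<and> (\<forall>s. norm (f (s + tt m) - f (s + snd (snd y))) \<le> e0/2)" for m y
    have r1: "\<exists>y\<in>F1. R1 m y" for m unfolding R1_def using F1(2) by blast
    have r2: "\<exists>y\<in>FA \<times> FB \<times> Ff. R2 m y" for m
    proof -
      obtain ya where "ya \<in> FA" "\<forall>s. norm (A (s + tt m) - A (s + ya)) \<le> e0/2" using FA(2) by blast
      moreover obtain yb where "yb \<in> FB" "\<forall>s. norm (B (s + tt m) - B (s + yb)) \<le> e0/2" using FB(2) by blast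
      moreover obtain yf where "yf \<in> Ff" "\<forall>s. norm (f (s + tt m) - f (s + yf)) \<le> e0/2" using Ff(2) by blast
      ultimately show ?thesis unfolding R2_def by (intro bexI[of _ "(ya, yb, yf)"]) auto
    qed
    have fin3: "finite (FA \<times> FB \<times> Ff)" using FA(1) FB(1) Ff(1) by simp
    have "\<exists>F. finite F \<and> (\<forall>m. \<exists>j\<in>F. \<exists>y1 y2. R1 m y1 \<and> R1 j y1 \<and> R2 m y2 \<and> R2 j y2)"
      by (rule tb_combine[OF F1(1) r1 fin3 r2])
    then obtain F where F: "finite F" "\<forall>m. \<exists>j\<in>F. \<exists>y1 y2. R1 m y1 \<and> R1 j y1 \<and> R2 m y2 \<and> R2 j y2"
      by (elim exE conjE) (rule that)
    have close: "norm (Hmat X B tt (n+m) - Hmat X B tt (n+j)) \<le> \<eta> \<and> norm (hvec X f tt (n+m) - hvec X f tt (n+j)) \<le> \<eta>"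
      if R: "R1 m y1" "R1 j y1" "R2 m y2" "R2 j y2" for m j y1 y2 n
    proof -
      have s1: "\<bar>tt (n + m) - tt m - (tt (n + j) - tt j)\<bar> \<le> d1" for n
      proof -
        have "\<bar>tt (n + m) - tt m - (tt (n + y1) - tt y1)\<bar> \<le> d1/2" "\<bar>tt (n + j) - tt j - (tt (n + y1) - tt y1)\<bar> \<le> d1/2"
          using R(1,2) unfolding R1_def by auto
        then show ?thesis by (simp only: abs_le_iff) linarith
      qed
      have sA: "norm (A (s + tt m) - A (s + tt j)) \<le> e0" for s
        using tri2[of "A (s + tt m)" "A (s + fst y2)" "e0/2" "A (s + tt j)"] R(3,4) unfolding R2_def by auto
      have sB: "norm (B (s + tt m) - B (s + tt j)) \<le> e0" for s
        using tri2[of "B (s + tt m)" "B (s + fst (snd y2))" "e0/2" "B (s + tt j)"] R(3,4) unfolding R2_def by auto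
      have sf: "norm (f (s + tt m) - f (s + tt j)) \<le> e0" for s
        using tri2[of "f (s + tt m)" "f (s + snd (snd y2))" "e0/2" "f (s + tt j)"] R(3,4) unfolding R2_def by auto
      define a where "a = tt (n + m)"
      define cc where "cc = tt (n + j) - tt (n + m)"
      have shift: "\<bar>(u + cc) - ((u - tt m) + tt j)\<bar> \<le> d1" for u
      proof -
        have "(u + cc) - ((u - tt m) + tt j) = - (tt (n + m) - tt m - (tt (n + j) - tt j))" unfolding cc_def by simp
        then show ?thesis using s1[of n] by (simp only: abs_minus_cancel)
      qed
      have thA: "norm (A u - A (u + cc)) \<le> e0 + e0" for u
      proof -
        have "norm (A u - A ((u - tt m) + tt j)) \<le> e0" using sA[of "u - tt m"] by simp
        moreover have "norm (A ((u - tt m) + tt j) - A (u + cc)) \<le> e0"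
          using dA(2)[of "(u - tt m) + tt j" "u + cc"] shift[of u] d1 by (simp add: abs_minus_commute)
        ultimately show ?thesis using tri[of "A u" "A (u + cc)" "A ((u - tt m) + tt j)"] by linarith
      qed
      have thB: "norm (B u - B (u + cc)) \<le> e0 + e0" for u
      proof -
        have "norm (B u - B ((u - tt m) + tt j)) \<le> e0" using sB[of "u - tt m"] by simp
        moreover have "norm (B ((u - tt m) + tt j) - B (u + cc)) \<le> e0"
          using dB(2)[of "(u - tt m) + tt j" "u + cc"] shift[of u] d1 by (simp add: abs_minus_commute)
        ultimately show ?thesis using tri[of "B u" "B (u + cc)" "B ((u - tt m) + tt j)"] by linarith
      qed
      have thf: "norm (f u - f (u + cc)) \<le> e0 + e0" for u
      proof -
        have "norm (f u - f ((u - tt m) + tt j)) \<le> e0" using sf[of "u - tt m"] by simp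
        moreover have "norm (f ((u - tt m) + tt j) - f (u + cc)) \<le> e0"
          using df(2)[of "(u - tt m) + tt j" "u + cc"] shift[of u] d1 by (simp add: abs_minus_commute)
        ultimately show ?thesis using tri[of "f u" "f (u + cc)" "f ((u - tt m) + tt j)"] by linarith
      qed
      define L where "L = tt (n + m + 1) - tt (n + m)"
      define L' where "L' = tt (n + j + 1) - tt (n + j)"
      have LL: "0 \<le> L" "L \<le> Lmax" "0 \<le> L'" "L' \<le> Lmax" unfolding L_def L'_def using Lpos Lmax by auto
      have dL: "\<bar>L - L'\<bar> \<le> d1 + d1"
      proof -
        have "\<bar>tt (n + 1 + m) - tt m - (tt (n + 1 + j) - tt j)\<bar> \<le> d1" by (rule s1)
        then have "\<bar>tt (n + m + 1) - tt m - (tt (n + j + 1) - tt j)\<bar> \<le> d1" by (simp add: ac_simps)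
        then show ?thesis using s1[of n] unfolding L_def L'_def by linarith
      qed
      have aj: "a + cc = tt (n + j)" unfolding a_def cc_def by simp
      have Hm: "Hmat X B tt (n + m) = fx.Hloc B a L" unfolding fx.Hmat_loc a_def L_def by simp
      have Hj: "Hmat X B tt (n + j) = fx.Hloc B (a + cc) L'" unfolding fx.Hmat_loc aj L'_def by simp
      have hm: "hvec X f tt (n + m) = fx.hloc f a L" unfolding fx.hvec_loc a_def L_def by simp
      have hj: "hvec X f tt (n + j) = fx.hloc f (a + cc) L'" unfolding fx.hvec_loc aj L'_def by simp
      have "norm (fx.Hloc B a L - fx.Hloc B (a + cc) L') \<le> fx.KH Lmax MB * ((e0 + e0) + (d1 + d1))"
        by (rule fx.H_dep[OF Bc MB LL thA thB dL])
      also have "\<dots> \<le> KK * (4 * e0)" using KK d1 e0 by (intro mult_mono) auto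
      also have "\<dots> = \<eta>" unfolding e0_def using KK by simp
      finally have 1: "norm (Hmat X B tt (n+m) - Hmat X B tt (n+j)) \<le> \<eta>" unfolding Hm Hj .
      have "norm (fx.hloc f a L - fx.hloc f (a + cc) L') \<le> fx.Kh Lmax Mf * ((e0 + e0) + (d1 + d1))"
        by (rule fx.h_dep[OF fc Mf LL thA thf dL])
      also have "\<dots> \<le> KK * (4 * e0)" using KK d1 e0 by (intro mult_mono) auto
      also have "\<dots> = \<eta>" unfolding e0_def using KK by simp
      finally have 2: "norm (hvec X f tt (n+m) - hvec X f tt (n+j)) \<le> \<eta>" unfolding hm hj .
      show ?thesis using 1 2 by blast
    qed
    show ?thesis
    proof (intro exI[of _ F] conjI allI)
      show "finite F" by (rule F(1))
      fix m
      obtain j y1 y2 where "j \<in> F" "R1 m y1" "R1 j y1" "R2 m y2" "R2 j y2" using F(2) by blast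
      then show "\<exists>j\<in>F. \<forall>n. norm (Hmat X B tt (n+m) - Hmat X B tt (n+j)) \<le> \<eta> \<and> norm (hvec X f tt (n+m) - hvec X f tt (n+j)) \<le> \<eta>"
        using close by blast
    qed
  qed
  have ap_c: "almost_periodic_int c"
    unfolding almost_periodic_int_def
  proof (intro allI impI)
    fix \<epsilon> :: real assume \<epsilon>: "\<epsilon> > 0"
    define Mc where "Mc = \<bar>dc.Cb * Mh\<bar>"
    have cb: "norm (c n) \<le> Mc" for n using c_bd[of n] unfolding Mc_def by linarith
    have Mc0: "Mc \<ge> 0" unfolding Mc_def by simp
    define \<eta> where "\<eta> = \<epsilon> / (dc.Cb * (Mc + 1))"
    have Cb: "dc.Cb > 0" by (rule dc.Cb_pos)
    have \<eta>: "\<eta> > 0" unfolding \<eta>_def using \<epsilon> Cb Mc0 by simp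
    have rd: "rel_dense_int {T. \<forall>n. norm (Hmat X B tt (n + T) - Hmat X B tt n) \<le> \<eta> \<and> norm (hvec X f tt (n + T) - hvec X f tt n) \<le> \<eta>}"
      by (rule z_bochner[OF tb \<eta>])
    show "rel_dense_int {\<tau>. \<forall>n. norm (c (n + \<tau>) - c n) \<le> \<epsilon>}"
    proof (rule rel_dense_int_mono[OF rd], rule subsetI, unfold mem_Collect_eq, rule allI)
      fix T n
      assume T: "\<forall>n. norm (Hmat X B tt (n + T) - Hmat X B tt n) \<le> \<eta> \<and> norm (hvec X f tt (n + T) - hvec X f tt n) \<le> \<eta>"
      define d where "d n = c (n + T) - c n" for n
      define g' where "g' n = (Hmat X B tt (n + T) - Hmat X B tt n) *v c (n + T) + (hvec X f tt (n + T) - hvec X f tt n)" for n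
      have deq: "d (n + 1) = Hmat X B tt n *v d n + g' n" for n
      proof -
        have "c (n + 1 + T) = Hmat X B tt (n + T) *v c (n + T) + hvec X f tt (n + T)"
          using c_sol[of "n + T"] by (simp add: ac_simps)
        then show ?thesis unfolding d_def g'_def using c_sol[of n]
          by (simp add: bounded_bilinear.diff_left[OF bb_mv] bounded_bilinear.diff_right[OF bb_mv] algebra_simps)
      qed
      have db: "norm (d n) \<le> Mc + Mc" for n unfolding d_def using cb[of "n + T"] cb[of n] norm_triangle_ineq4 by (smt (verit))
      have gb: "norm (g' k) \<le> \<eta> * Mc + \<eta>" for k
      proof -
        have "norm (g' k) \<le> norm ((Hmat X B tt (k + T) - Hmat X B tt k) *v c (k + T)) + norm (hvec X f tt (k + T) - hvec X f tt k)"
          unfolding g'_def by (rule norm_triangle_ineq)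
        also have "norm ((Hmat X B tt (k + T) - Hmat X B tt k) *v c (k + T)) \<le> \<eta> * Mc"
          using norm_mv[of "Hmat X B tt (k + T) - Hmat X B tt k" "c (k + T)"] T cb[of "k + T"] \<eta>
          by (smt (verit, best) mult_mono norm_ge_zero)
        finally show ?thesis using T by smt
      qed
      have "norm (d n) \<le> dc.Cb * (\<eta> * Mc + \<eta>)" by (rule dc.bounded_sol(2)[OF deq db gb])
      also have "dc.Cb * (\<eta> * Mc + \<eta>) = \<eta> * (dc.Cb * (Mc + 1))" by (simp add: algebra_simps)
      also have "\<dots> = \<epsilon>" unfolding \<eta>_def using Cb Mc0 by simp
      finally show "norm (c (n + T) - c n) \<le> \<epsilon>" unfolding d_def .
    qed
  qed
  have uniq: "\<forall>c'. almost_periodic_int c' \<and> (\<forall>n. c' (n + 1) = Hmat X B tt n *v c' n + hvec X f tt n) \<longrightarrow> c' = c"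
  proof (intro allI impI)
    fix c' assume c': "almost_periodic_int c' \<and> (\<forall>n. c' (n + 1) = Hmat X B tt n *v c' n + hvec X f tt n)"
    obtain M' where M': "\<And>n. norm (c' n) \<le> M'" using zap_bounded c' by blast
    show "c' = c"
    proof
      fix n show "c' n = c n" unfolding c_def by (rule dc.bounded_sol(1)[OF _ M' hb]) (use c' in blast)
    qed
  qed
  have bdd: "bdd_above (range (\<lambda>k. norm (hvec X f tt k)))"
    by (rule bdd_aboveI2[of _ _ Mh]) (rule hb)
  have bound: "\<forall>n. norm (c n) \<le> 2 * K / (1 - \<rho>) * (SUP k. norm (hvec X f tt k))"
  proof
    fix n
    define S where "S = (SUP k. norm (hvec X f tt k))"
    have hS: "norm (hvec X f tt k) \<le> S" for k unfolding S_def by (rule cSUP_upper[OF UNIV_I bdd])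
    have S0: "S \<ge> 0" using hS[of 0] norm_ge_zero order.trans by blast
    have "norm (c n) \<le> dc.Cb * S" unfolding c_def by (rule dc.green_summable(2)[OF hS])
    also have "\<dots> \<le> 2 * K / (1 - \<rho>) * S" using dc.Cb_le S0 by (rule mult_right_mono)
    finally show "norm (c n) \<le> 2 * K / (1 - \<rho>) * (SUP k. norm (hvec X f tt k))" unfolding S_def .
  qed
  show ?thesis using ap_c c_sol uniq bdd bound by blast
qed


end
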